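(* For every positive integer $p$ and every composition $I=(i_1,\dots,i_r)$, \[ L_p(q)\star_q L_I(q)=\sum_{K\preceq p\triangleright I}q^{\mathrm{st}(K,\,p\triangleright I)}\begin{bmatrix}m_K+p\\ p\end{bmatrix}_q\Psi_K, \] where $p\triangleright I=(p+i_1,i_2,\dots,i_r)$, $m_K=\#\{d\in\mathrm{Des}(K):d\ge p\}$, and $L_p(q)=L_{(p)}(q)$.
   Context: Compositions: positive integers with given sum $n$; $\mathrm{Des}(I)$ is the set of partial sums other than $n$; $K\preceq J$ iff $\mathrm{Des}(K)\supseteq\mathrm{Des}(J)$; $\mathrm{st}(K,J)=\#\{(a,b)\in\mathrm{Des}(K)\times\mathrm{Des}(J):a\ge b\}$. Over $\mathbb K(q)$ ($\mathrm{char}\,\mathbb K=0$): packed words are words with letter set $\{1,\dots,m\}$; $\mathrm{pack}$ replaces the $t$-th smallest letter by $t$. For a packed word $w$ of length $N$: $\mathrm{WC}(w)$ is the composition of $N$ whose descent set is the set of positions $p'<N$ with $w_{p'}$ not occurring later in $w$; $\mathrm{sinv}(w)=\#\{i<j:w_i>w_j,\ w_j\text{ not occurring in }w_{j+1}\cdots w_N\}$. $\mathbf{WQSym}$ has basis $\mathbf M_u$ with $\mathbf M_{u'}\mathbf M_{u''}=\sum\mathbf M_z$ over packed $z=x\cdot y$ with $\mathrm{pack}(x)=u'$, $\mathrm{pack}(y)=u''$; $\mathbf M_{u'}\star_q\mathbf M_{u''}=\sum q^{\mathrm{sinv}(z)-\mathrm{sinv}(u')-\mathrm{sinv}(u'')}\mathbf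 M_z$. $\mathbf{Sym}$ is the quotient by the span of $\mathbf M_z-\mathbf M_{z'}$ with $\mathrm{WC}(z)=\mathrm{WC}(z')$, $\zeta$ the quotient map, $\Psi_I=\zeta(\mathbf M_u)$ for $\mathrm{WC}(u)=I$ (a basis). Let $\sigma:\mathbf{Sym}\to\mathbf{WQSym}$ be linear with $\sigma(\Psi_I)=\mathbf M_{1^{i_1}2^{i_2}\cdots r^{i_r}}$, and define the (non-associative) product $f\star_q g=\zeta(\sigma(f)\star_q\sigma(g))$ on $\mathbf{Sym}$. $L_J(q)=\sum_{K\preceq J}q^{\mathrm{st}(K,J)}\Psi_K$. *)

theory Defs
  imports Main "HOL-Computational_Algebra.Polynomial" "HOL-Computational_Algebra.Fraction_Field"
begin

definition is_comp :: "nat list \<Rightarrow> bool" where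
  "is_comp I \<longleftrightarrow> (\<forall>x\<in>set I. 0 < x)"

definition Des :: "nat list \<Rightarrow> nat set" where
  "Des I = {sum_list (take k I) | k. 0 < k \<and> k < length I}"

definition comp_leq :: "nat list \<Rightarrow> nat list \<Rightarrow> bool" where
  "comp_leq K J \<longleftrightarrow> is_comp K \<and> is_comp J \<and> sum_list K = sum_list J \<and> Des J \<subseteq> Des K"

definition st :: "nat list \<Rightarrow> nat list \<Rightarrow> nat" where
  "st K J = card {(a, b). a \<in> Des K \<and> b \<in> Des J \<and> b \<le> a}"

text \<open>The composition of n with a given descent set S (subset of 1..n-1).\<close>
definition comp_from_des :: "nat \<Rightarrow> nat set \<Rightarrow> nat list" where
  "comp_from_des n S =
     (let l = sorted_list_of_set ((S \<union> {n}) \<inter> {0<..n}) in map2 (\<lambda>a b. a - b) l (0 # l))"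

definition packed :: "nat list \<Rightarrow> bool" where
  "packed w \<longleftrightarrow> set w = {1..card (set w)}"

definition pack :: "nat list \<Rightarrow> nat list" where
  "pack w = map (\<lambda>x. card {y \<in> set w. y \<le> x}) w"

definition WC :: "nat list \<Rightarrow> nat list" where
  "WC w = comp_from_des (length w)
     {p. 1 \<le> p \<and> p < length w \<and> w ! (p - 1) \<notin> set (drop p w)}"

definition sinv :: "nat list \<Rightarrow> nat" where
  "sinv w = card {(i, j). i < j \<and> j < length w \<and> w ! j < w ! i \<and> w ! j \<notin> set (drop (Suc j) w)}"

text \<open>An element of WQSym is a finitely supported function from packed words to coefficients
  (coefficient of M_u); an element of Sym a finitely supported function from compositions
  to coefficients (coefficient of Psi_I).\<close>

definition supp :: "('b \<Rightarrow> 'a::zero) \<Rightarrow> 'b set" where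
  "supp f = {x. f x \<noteq> 0}"

text \<open>Coefficient of M_z in M_u star_q M_v.\<close>
definition Mstar_coeff :: "'a::field \<Rightarrow> nat list \<Rightarrow> nat list \<Rightarrow> nat list \<Rightarrow> 'a" where
  "Mstar_coeff q u v z =
     (if packed z \<and> length z = length u + length v \<and>
         pack (take (length u) z) = u \<and> pack (drop (length u) z) = v
      then q powi (int (sinv z) - int (sinv u) - int (sinv v)) else 0)"

definition wq_star :: "'a::field \<Rightarrow> (nat list \<Rightarrow> 'a) \<Rightarrow> (nat list \<Rightarrow> 'a) \<Rightarrow> (nat list \<Rightarrow> 'a)" where
  "wq_star q F G = (\<lambda>z. \<Sum>u\<in>supp F. \<Sum>v\<in>supp G. F u * G v * Mstar_coeff q u v z)"

definition zeta :: "(nat list \<Rightarrow> 'a::comm_monoid_add) \<Rightarrow> (nat list \<Rightarrow> 'a)" where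
  "zeta F = (\<lambda>I. \<Sum>z\<in>{z. z \<in> supp F \<and> packed z \<and> WC z = I}. F z)"

definition word_of_comp :: "nat list \<Rightarrow> nat list" where
  "word_of_comp I = concat (map (\<lambda>(k, i). replicate i (Suc k)) (List.enumerate 0 I))"

definition sigma :: "(nat list \<Rightarrow> 'a::comm_monoid_add) \<Rightarrow> (nat list \<Rightarrow> 'a)" where
  "sigma f = (\<lambda>z. \<Sum>I\<in>{I. I \<in> supp f \<and> word_of_comp I = z}. f I)"

definition sym_star :: "'a::field \<Rightarrow> (nat list \<Rightarrow> 'a) \<Rightarrow> (nat list \<Rightarrow> 'a) \<Rightarrow> (nat list \<Rightarrow> 'a)" where
  "sym_star q f g = zeta (wq_star q (sigma f) (sigma g))"

definition Psi :: "nat list \<Rightarrow> (nat list \<Rightarrow> 'a::{zero,one})" where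
  "Psi K = (\<lambda>I. if I = K then 1 else 0)"

definition Lq :: "nat list \<Rightarrow> 'a::comm_semiring_1 \<Rightarrow> (nat list \<Rightarrow> 'a)" where
  "Lq J q = (\<lambda>I. \<Sum>K\<in>{K. comp_leq K J}. q ^ st K J * Psi K I)"

definition qint :: "nat \<Rightarrow> 'a::comm_semiring_1 \<Rightarrow> 'a" where
  "qint n q = (\<Sum>i<n. q ^ i)"

definition qfact :: "nat \<Rightarrow> 'a::comm_semiring_1 \<Rightarrow> 'a" where
  "qfact n q = (\<Prod>i=1..n. qint i q)"

definition qbinom :: "nat \<Rightarrow> nat \<Rightarrow> 'a::field \<Rightarrow> 'a" where
  "qbinom n k q = (if k \<le> n then qfact n q / (qfact k q * qfact (n - k) q) else 0)"

definition qvar :: "'k::field poly fract" where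
  "qvar = Fract [:0, 1:] 1"

definition tri :: "nat \<Rightarrow> nat list \<Rightarrow> nat list" where
  "tri p I = (p + hd I) # tl I"

definition mK :: "nat \<Rightarrow> nat list \<Rightarrow> nat" where
  "mK p K = card {d \<in> Des K. p \<le> d}"

end

theory Submission
  imports Defs
begin


definition Cset :: "nat \<Rightarrow> nat \<Rightarrow> nat list set" where
  "Cset p M = {c. length c = p \<and> sorted c \<and> (\<forall>x\<in>set c. x \<le> M)}"

lemma finite_Cset: "finite (Cset p M)"
proof -
  have "Cset p M \<subseteq> {xs. set xs \<subseteq> {0..M} \<and> length xs = p}"
    unfolding Cset_def by auto
  moreover have "finite {xs. set xs \<subseteq> {0..M} \<and> length xs = p}"
    by (rule finite_lists_length_eq) simp
  ultimately show ?thesis by (rule finite_subset)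
qed

lemma Cset_0: "Cset 0 M = {[]}" unfolding Cset_def by auto

lemma Cset_M0: "Cset p 0 = {replicate p 0}"
  unfolding Cset_def
  by (auto simp: sorted_replicate intro!: replicate_eqI)

lemma sum_list_replicate0: "sum_list (replicate p (0::nat)) = 0" by simp

lemma Cset_split: "Cset (Suc p) (Suc M) = (Cons 0) ` Cset p (Suc M) \<union> (map Suc) ` Cset (Suc p) M"
proof (rule set_eqI, rule iffI)
  fix c assume "c \<in> Cset (Suc p) (Suc M)"
  then obtain a c' where c: "c = a # c'" "length c' = p" "sorted (a#c')" "\<forall>x\<in>set (a#c'). x \<le> Suc M"
    unfolding Cset_def by (cases c) auto
  show "c \<in> (Cons 0) ` Cset p (Suc M) \<union> (map Suc) ` Cset (Suc p) M"
  proof (cases "a = 0")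
    case True then show ?thesis using c unfolding Cset_def by auto
  next
    case False
    then have pos: "\<forall>x\<in>set c. 0 < x" using c by auto
    have "c = map Suc (map (\<lambda>x. x - 1) c)" using pos by (induct c) auto
    moreover have "map (\<lambda>x. x - 1) c \<in> Cset (Suc p) M"
      unfolding Cset_def using c pos
      by (auto simp: sorted_map intro!: sorted_wrt_mono_rel[where P="(\<le>)"] diff_le_mono)
    ultimately show ?thesis by blast
  qed
next
  fix c assume "c \<in> (Cons 0) ` Cset p (Suc M) \<union> (map Suc) ` Cset (Suc p) M"
  then show "c \<in> Cset (Suc p) (Suc M)" unfolding Cset_def by (auto simp: sorted_map)
qed

definition Gs :: "'a::comm_semiring_1 \<Rightarrow> nat \<Rightarrow> nat \<Rightarrow> 'a" where
  "Gs q p M = (\<Sum>c\<in>Cset p M. q ^ sum_list c)"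

lemma sum_list_map_Suc: "sum_list (map Suc c) = sum_list c + length c"
  by (induct c) auto

lemma Gs_rec: "Gs q (Suc p) (Suc M) = Gs q p (Suc M) + q ^ Suc p * Gs q (Suc p) M"
proof -
  have disj: "(Cons 0) ` Cset p (Suc M) \<inter> (map Suc) ` Cset (Suc p) M = {}" by auto
  have "Gs q (Suc p) (Suc M) = (\<Sum>c\<in>(Cons 0) ` Cset p (Suc M). q ^ sum_list c)
     + (\<Sum>c\<in>(map Suc) ` Cset (Suc p) M. q ^ sum_list c)"
    unfolding Gs_def Cset_split by (rule sum.union_disjoint) (auto simp: finite_Cset disj)
  also have "(\<Sum>c\<in>(Cons 0) ` Cset p (Suc M). q ^ sum_list c) = Gs q p (Suc M)"
    unfolding Gs_def by (subst sum.reindex) (auto simp: inj_on_def)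
  also have "(\<Sum>c\<in>(map Suc) ` Cset (Suc p) M. q ^ sum_list c) = (\<Sum>c\<in>Cset (Suc p) M. q ^ sum_list (map Suc c))"
    by (subst sum.reindex) (auto simp: inj_on_def)
  also have "\<dots> = q ^ Suc p * Gs q (Suc p) M"
    unfolding Gs_def sum_distrib_left
    by (rule sum.cong) (auto simp: sum_list_map_Suc Cset_def power_add mult_ac)
  finally show ?thesis .
qed

lemma Gs_0: "Gs q 0 M = 1" unfolding Gs_def Cset_0 by simp
lemma Gs_M0: "Gs q p 0 = 1" unfolding Gs_def Cset_M0 by (simp add: sum_list_replicate)

lemma qint_Suc: "qint (Suc n) q = qint n q + q ^ n" unfolding qint_def by simp
lemma qfact_Suc: "qfact (Suc n) q = qfact n q * qint (Suc n) q"
  unfolding qfact_def by (simp add: prod.cl_ivl_Suc) 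

lemma qint_add: "qint (a + b) q = qint a q + q ^ a * qint b q"
  by (induct b) (auto simp: qint_Suc algebra_simps power_add, simp add: qint_def)

lemma qfact_nz: assumes "\<And>i. 0 < i \<Longrightarrow> qint i q \<noteq> (0::'a::field)" shows "qfact n q \<noteq> 0"
  unfolding qfact_def using assms by (auto simp: prod_zero_iff)

lemma qpascal:
  fixes q :: "'a::field"
  assumes nz: "\<And>i. 0 < i \<Longrightarrow> qint i q \<noteq> 0"
  shows "qbinom (Suc n) (Suc k) q = qbinom n k q + q ^ Suc k * qbinom n (Suc k) q"
proof (cases "k < n")
  case True
  then obtain j where n: "n = k + Suc j" by (metis add_Suc_right less_iff_Suc_add add.commute)
  have e1: "Suc n - Suc k = Suc j" "n - k = Suc j" "n - Suc k = j" using n by auto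
  have fa: "qfact k q \<noteq> 0" "qfact j q \<noteq> 0" "qint (Suc k) q \<noteq> 0" "qint (Suc j) q \<noteq> 0"
    using nz qfact_nz[OF nz] by auto
  have id: "qint (Suc n) q = qint (Suc k) q + q ^ Suc k * qint (Suc j) q"
    using qint_add[of "Suc k" "Suc j" q] n by simp
  show ?thesis using True fa unfolding qbinom_def e1
    by (simp add: qfact_Suc id field_simps)
next
  case False
  show ?thesis
  proof (cases "k = n")
    case True
    have "qfact n q \<noteq> 0" "qint (Suc n) q \<noteq> 0" using nz qfact_nz[OF nz] by auto
    then show ?thesis using True unfolding qbinom_def by (simp add: qfact_Suc field_simps qfact_def)
  next
    case False
    then show ?thesis using \<open>\<not> k < n\<close> unfolding qbinom_def by auto
  qed
qed

lemma qbinom_0: "qfact n q \<noteq> 0 \<Longrightarrow> qbinom n 0 (q::'a::field) = 1" unfolding qbinom_def by (simp add: qfact_def)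
lemma Gs_qbinom:
  fixes q :: "'a::field"
  assumes nz: "\<And>i. 0 < i \<Longrightarrow> qint i q \<noteq> 0"
  shows "Gs q p M = qbinom (M + p) p q"
proof (induct p arbitrary: M)
  case 0 then show ?case using qfact_nz[OF nz] by (simp add: Gs_0 qbinom_0)
next
  case (Suc p)
  note outer = Suc.hyps
  show ?case
  proof (induct M)
    case 0 then show ?case using qfact_nz[OF nz, of "Suc p"] by (simp add: Gs_M0 qbinom_def, simp add: qfact_def)
  next
    case (Suc M)
    have "Gs q (Suc p) (Suc M) = Gs q p (Suc M) + q ^ Suc p * Gs q (Suc p) M" by (rule Gs_rec)
    also have "\<dots> = qbinom (Suc M + p) p q + q ^ Suc p * qbinom (M + Suc p) (Suc p) q"
      using Suc.hyps outer[of "Suc M"] by simp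
    also have "\<dots> = qbinom (Suc M + Suc p) (Suc p) q"
      using qpascal[OF nz, of "M + Suc p" p] by simp
    finally show ?case .
  qed
qed




lemma in_set_drop_iff: "x \<in> set (drop k v) \<longleftrightarrow> (\<exists>j. k \<le> j \<and> j < length v \<and> v ! j = x)"
proof
  assume "x \<in> set (drop k v)"
  then obtain i where "i < length (drop k v)" "drop k v ! i = x" by (auto simp: in_set_conv_nth)
  then show "\<exists>j. k \<le> j \<and> j < length v \<and> v ! j = x" by (intro exI[of _ "k + i"]) auto
next
  assume "\<exists>j. k \<le> j \<and> j < length v \<and> v ! j = x"
  then obtain j where "k \<le> j" "j < length v" "v ! j = x" by auto
  then show "x \<in> set (drop k v)" unfolding in_set_conv_nth
    by (intro exI[of _ "j - k"]) auto
qed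

definition samepat :: "nat list \<Rightarrow> nat list \<Rightarrow> bool" where
  "samepat v w \<longleftrightarrow> length v = length w \<and> (\<forall>i<length v. \<forall>j<length v. v!i \<le> v!j \<longleftrightarrow> w!i \<le> w!j)"

lemma samepat_eq: "samepat v w \<Longrightarrow> i < length v \<Longrightarrow> j < length v \<Longrightarrow> v!i = v!j \<longleftrightarrow> w!i = w!j"
  unfolding samepat_def by (metis order_antisym order_refl)
lemma samepat_le: "samepat v w \<Longrightarrow> i < length v \<Longrightarrow> j < length v \<Longrightarrow> v!i \<le> v!j \<longleftrightarrow> w!i \<le> w!j"
  unfolding samepat_def by blast
lemma samepat_less: "samepat v w \<Longrightarrow> i < length v \<Longrightarrow> j < length v \<Longrightarrow> v!i < v!j \<longleftrightarrow> w!i < w!j"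
  unfolding samepat_def by (meson not_le)
lemma samepat_sym: "samepat v w \<Longrightarrow> samepat w v" unfolding samepat_def by auto
lemma samepat_trans: "samepat u v \<Longrightarrow> samepat v w \<Longrightarrow> samepat u w" unfolding samepat_def by auto

definition rk :: "nat set \<Rightarrow> nat \<Rightarrow> nat" where "rk A x = card {a\<in>A. a \<le> x}"

lemma rk_le_iff: assumes "finite A" "x \<in> A" "y \<in> A" shows "rk A x \<le> rk A y \<longleftrightarrow> x \<le> y"
proof
  assume "x \<le> y" then show "rk A x \<le> rk A y" unfolding rk_def
    by (intro card_mono) (use assms in auto)
next
  assume h: "rk A x \<le> rk A y"
  show "x \<le> y"
  proof (rule ccontr)
    assume "\<not> x \<le> y"
    then have "{a\<in>A. a \<le> y} \<subset> {a\<in>A. a \<le> x}" using assms by auto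
    then have "rk A y < rk A x" unfolding rk_def by (intro psubset_card_mono) (use assms in auto)
    with h show False by simp
  qed
qed

lemma rk_image: assumes "finite A" shows "rk A ` A = {1..card A}"
proof -
  have inj: "inj_on (rk A) A" unfolding inj_on_def using rk_le_iff[OF assms] by (metis order_antisym order_refl)
  have sub: "rk A ` A \<subseteq> {1..card A}"
  proof
    fix r assume "r \<in> rk A ` A"
    then obtain x where x: "x \<in> A" "r = rk A x" by auto
    have "rk A x \<ge> 1" unfolding rk_def using x assms
    proof -
      have "finite {a\<in>A. a \<le> x}" "x \<in> {a\<in>A. a \<le> x}" using x assms by auto
      then have "card {a\<in>A. a \<le> x} > 0" by (auto simp: card_gt_0_iff)
      then show "1 \<le> card {a\<in>A. a \<le> x}" by simp
    qed
    moreover have "rk A x \<le> card A" unfolding rk_def by (rule card_mono) (use assms in auto)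
    ultimately show "r \<in> {1..card A}" using x by auto
  qed
  have "card (rk A ` A) = card {1..card A}" using card_image[OF inj] by simp
  then show ?thesis using sub by (intro card_subset_eq) auto
qed

lemma pack_rk: "pack w = map (rk (set w)) w" unfolding pack_def rk_def by simp

lemma length_pack[simp]: "length (pack w) = length w" unfolding pack_def by simp
lemma nth_pack: "i < length w \<Longrightarrow> pack w ! i = rk (set w) (w ! i)" unfolding pack_rk by simp

lemma packed_pack: "packed (pack w)"
proof -
  have "set (pack w) = rk (set w) ` set w" unfolding pack_rk by simp
  also have "\<dots> = {1..card (set w)}" by (rule rk_image) simp
  finally show ?thesis unfolding packed_def by simp
qed

lemma samepat_pack: "samepat w (pack w)"
  unfolding samepat_def
proof (intro conjI allI impI)
  fix i j assume "i < length w" "j < length w"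
  then show "w!i \<le> w!j \<longleftrightarrow> pack w!i \<le> pack w!j"
    using rk_le_iff[of "set w" "w!i" "w!j"] by (simp add: nth_pack)
qed simp

lemma packed_pack_id: assumes "packed z" shows "pack z = z"
proof (rule nth_equalityI)
  fix i assume i: "i < length (pack z)"
  obtain M where s: "set z = {1..M}" using assms unfolding packed_def by blast
  have zi: "z ! i \<in> {1..M}" using i nth_mem[of i z] unfolding s by simp
  have "{a\<in>set z. a \<le> z!i} = {1..z!i}" unfolding s using zi by auto
  then show "pack z ! i = z ! i" using i by (simp add: nth_pack rk_def)
qed simp

lemma card_image_samepat:
  assumes sp: "samepat v w" and A: "A \<subseteq> {..<length v}"
  shows "card ((!) v ` A) = card ((!) w ` A)"
proof -
  define g where "g x = w ! (SOME j. j \<in> A \<and> v ! j = x)" for x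
  have gj: "g (v ! j) = w ! j" if "j \<in> A" for j
  proof -
    have ex: "\<exists>j'. j' \<in> A \<and> v ! j' = v ! j" using that by blast
    let ?j = "SOME j'. j' \<in> A \<and> v ! j' = v ! j"
    have "?j \<in> A \<and> v ! ?j = v ! j" using someI_ex[OF ex] .
    then show ?thesis unfolding g_def using samepat_eq[OF sp] A that by blast
  qed
  have "(!) w ` A = g ` ((!) v ` A)" using gj by (auto simp: image_image)
  moreover have "inj_on g ((!) v ` A)"
  proof (rule inj_onI)
    fix x y assume "x \<in> (!) v ` A" "y \<in> (!) v ` A" "g x = g y"
    then obtain a b where "a \<in> A" "b \<in> A" "x = v!a" "y = v!b" "w!a = w!b" using gj by auto
    then show "x = y" using samepat_eq[OF sp] A by blast
  qed
  ultimately show ?thesis by (simp add: card_image)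
qed

lemma set_eq_image_nth: "{a \<in> set v. P a} = (!) v ` {j. j < length v \<and> P (v ! j)}"
  by (auto simp: in_set_conv_nth)

lemma samepat_pack_eq: assumes sp: "samepat v w" shows "pack v = pack w"
proof (rule nth_equalityI)
  show "length (pack v) = length (pack w)" using sp unfolding samepat_def by simp
  fix i assume i: "i < length (pack v)"
  let ?A = "{j. j < length v \<and> v ! j \<le> v ! i}"
  have eqA: "?A = {j. j < length w \<and> w ! j \<le> w ! i}"
    using samepat_le[OF sp] i sp unfolding samepat_def by auto
  have "card ((!) v ` ?A) = card ((!) w ` ?A)" by (rule card_image_samepat[OF sp]) auto
  then show "pack v ! i = pack w ! i" using i sp eqA unfolding samepat_def
    by (simp add: nth_pack rk_def set_eq_image_nth[where P="\<lambda>a. a \<le> _"])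
qed

definition Sz :: "nat list \<Rightarrow> nat set" where
  "Sz w = {p. 1 \<le> p \<and> p < length w \<and> w ! (p - 1) \<notin> set (drop p w)}"

lemma WC_Sz: "WC w = comp_from_des (length w) (Sz w)" unfolding WC_def Sz_def by simp

lemma samepat_later: assumes sp: "samepat v w" and j: "j < length v"
  shows "v ! j \<in> set (drop k v) \<longleftrightarrow> w ! j \<in> set (drop k w)"
proof -
  have l: "length v = length w" using sp unfolding samepat_def by simp
  show ?thesis unfolding in_set_drop_iff l
  proof
    assume "\<exists>j'. k \<le> j' \<and> j' < length w \<and> v ! j' = v ! j"
    then obtain j' where "k \<le> j'" "j' < length w" "v ! j' = v ! j" by blast
    then show "\<exists>j'. k \<le> j' \<and> j' < length w \<and> w ! j' = w ! j" using samepat_eq[OF sp, of j' j] j l by auto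
  next
    assume "\<exists>j'. k \<le> j' \<and> j' < length w \<and> w ! j' = w ! j"
    then obtain j' where "k \<le> j'" "j' < length w" "w ! j' = w ! j" by blast
    then show "\<exists>j'. k \<le> j' \<and> j' < length w \<and> v ! j' = v ! j" using samepat_eq[OF sp, of j' j] j l by auto
  qed
qed

lemma samepat_Sz: assumes sp: "samepat v w" shows "Sz v = Sz w"
proof -
  have l: "length v = length w" using sp unfolding samepat_def by simp
  have "v ! (k - 1) \<in> set (drop k v) \<longleftrightarrow> w ! (k - 1) \<in> set (drop k w)" if "1 \<le> k" "k < length v" for k
    by (rule samepat_later[OF sp]) (use that in auto)
  then show ?thesis unfolding Sz_def l by auto
qed

lemma samepat_sinv: assumes sp: "samepat v w" shows "sinv v = sinv w"
proof -
  have l: "length v = length w" using sp unfolding samepat_def by simp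
  have "{(i, j). i < j \<and> j < length v \<and> v ! j < v ! i \<and> v ! j \<notin> set (drop (Suc j) v)}
      = {(i, j). i < j \<and> j < length w \<and> w ! j < w ! i \<and> w ! j \<notin> set (drop (Suc j) w)}"
  proof -
    have A: "\<And>i j. i < j \<Longrightarrow> j < length v \<Longrightarrow> v!j < v!i \<longleftrightarrow> w!j < w!i"
      using samepat_less[OF sp] by auto
    have B: "\<And>j. j < length v \<Longrightarrow> v!j \<in> set (drop (Suc j) v) \<longleftrightarrow> w!j \<in> set (drop (Suc j) w)"
      using samepat_later[OF sp] by auto
    show ?thesis using A B l by auto
  qed
  then show ?thesis unfolding sinv_def by simp
qed

definition sorted_on :: "nat list \<Rightarrow> nat \<Rightarrow> nat \<Rightarrow> bool" where
  "sorted_on v a b \<longleftrightarrow> (\<forall>i j. a \<le> i \<longrightarrow> i \<le> j \<longrightarrow> j < b \<longrightarrow> v ! i \<le> v ! j)"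

lemma sorted_take_iff: "p \<le> length v \<Longrightarrow> sorted (take p v) \<longleftrightarrow> sorted_on v 0 p"
  unfolding sorted_iff_nth_mono sorted_on_def by auto

lemma sorted_drop_iff: "sorted (drop p v) \<longleftrightarrow> sorted_on v p (length v)"
  unfolding sorted_iff_nth_mono sorted_on_def
proof (intro iffI allI impI)
  fix i j assume H: "\<forall>i j. i \<le> j \<longrightarrow> j < length (drop p v) \<longrightarrow> drop p v ! i \<le> drop p v ! j"
    and h: "p \<le> i" "i \<le> j" "j < length v"
  have "i - p \<le> j - p" "j - p < length (drop p v)" using h by auto
  then show "v ! i \<le> v ! j" using H[rule_format, of "i - p" "j - p"] h by auto
next
  fix i j assume H: "\<forall>i j. p \<le> i \<longrightarrow> i \<le> j \<longrightarrow> j < length v \<longrightarrow> v ! i \<le> v ! j"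
    and h: "i \<le> j" "j < length (drop p v)"
  then show "drop p v ! i \<le> drop p v ! j" using H[rule_format, of "p + i" "p + j"] by auto
qed

lemma samepat_sorted_on: assumes sp: "samepat v w" "b \<le> length v" shows "sorted_on v a b \<longleftrightarrow> sorted_on w a b"
  unfolding sorted_on_def
proof (intro iffI allI impI)
  fix i j assume H: "\<forall>i j. a \<le> i \<longrightarrow> i \<le> j \<longrightarrow> j < b \<longrightarrow> v ! i \<le> v ! j" and h: "a \<le> i" "i \<le> j" "j < b"
  then show "w ! i \<le> w ! j" using samepat_le[OF sp(1), of i j] sp(2) by auto
next
  fix i j assume H: "\<forall>i j. a \<le> i \<longrightarrow> i \<le> j \<longrightarrow> j < b \<longrightarrow> w ! i \<le> w ! j" and h: "a \<le> i" "i \<le> j" "j < b"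
  then show "v ! i \<le> v ! j" using samepat_le[OF sp(1), of i j] sp(2) by auto
qed




lemma Des_Nil[simp]: "Des [] = {}" unfolding Des_def by auto

lemma Des_Cons: "Des (a # K) = (if K = [] then {} else insert a ((+) a ` Des K))"
proof (cases "K = []")
  case True then show ?thesis unfolding Des_def by auto
next
  case False
  have "Des (a # K) = {sum_list (take k (a # K)) | k. 0 < k \<and> k < Suc (length K)}" unfolding Des_def by simp
  also have "\<dots> = {a + sum_list (take k K) | k. k < length K}"
  proof (rule set_eqI, rule iffI)
    fix x assume "x \<in> {sum_list (take k (a # K)) | k. 0 < k \<and> k < Suc (length K)}"
    then obtain k where "x = sum_list (take k (a # K))" "0 < k" "k < Suc (length K)" by blast
    then show "x \<in> {a + sum_list (take k K) | k. k < length K}"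
      by (intro CollectI exI[of _ "k - 1"]) (cases k, auto)
  next
    fix x assume "x \<in> {a + sum_list (take k K) | k. k < length K}"
    then obtain k where "x = a + sum_list (take k K)" "k < length K" by blast
    then show "x \<in> {sum_list (take k (a # K)) | k. 0 < k \<and> k < Suc (length K)}"
      by (intro CollectI exI[of _ "Suc k"]) auto
  qed
  also have "\<dots> = insert a ((+) a ` Des K)"
  proof (rule set_eqI, rule iffI)
    fix x assume "x \<in> {a + sum_list (take k K) | k. k < length K}"
    then obtain k where "x = a + sum_list (take k K)" "k < length K" by blast
    then show "x \<in> insert a ((+) a ` Des K)" unfolding Des_def by (cases "k = 0") auto
  next
    fix x assume "x \<in> insert a ((+) a ` Des K)"
    then show "x \<in> {a + sum_list (take k K) | k. k < length K}"
      unfolding Des_def using False by (auto intro: exI[of _ 0])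
  qed
  finally show ?thesis using False by simp
qed

lemma is_comp_Cons[simp]: "is_comp (a # K) \<longleftrightarrow> 0 < a \<and> is_comp K" unfolding is_comp_def by auto
lemma is_comp_Nil[simp]: "is_comp []" unfolding is_comp_def by auto

lemma Des_sub: "is_comp K \<Longrightarrow> Des K \<subseteq> {1..<sum_list K}"
proof (induct K)
  case (Cons a K)
  show ?case
  proof (cases "K = []")
    case True then show ?thesis by (simp add: Des_Cons)
  next
    case False
    have "sum_list K > 0" using Cons.prems False by (cases K) auto
    then show ?thesis using Cons False by (auto simp: Des_Cons)
  qed
qed simp

lemma Des_ge: "is_comp (a # K) \<Longrightarrow> x \<in> Des (a # K) \<Longrightarrow> a \<le> x"
  using Des_sub[of K] by (auto simp: Des_Cons split: if_splits)

lemma comp_inj: "is_comp K \<Longrightarrow> is_comp K' \<Longrightarrow> sum_list K = sum_list K' \<Longrightarrow> Des K = Des K' \<Longrightarrow> K = K'"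
proof (induct K arbitrary: K')
  case Nil
  then show ?case by (cases K') auto
next
  case (Cons a K)
  obtain a' K1 where K': "K' = a' # K1" using Cons.prems by (cases K') auto
  show ?case
  proof (cases "K = []")
    case True
    have "K1 = []" using Cons.prems True K' by (auto simp: Des_Cons split: if_splits)
    then show ?thesis using Cons.prems True K' by simp
  next
    case False
    have K1: "K1 \<noteq> []" using Cons.prems False K' by (auto simp: Des_Cons split: if_splits)
    have "a \<in> Des K'" "a' \<in> Des (a # K)" using Cons.prems False K1 K' by (auto simp: Des_Cons)
    then have "a' \<le> a" "a \<le> a'" using Des_ge[of a' K1] Des_ge[of a K] Cons.prems K' by auto
    then have aa: "a = a'" by simp
    have "insert a ((+) a ` Des K) = insert a ((+) a ` Des K1)" using Cons.prems False K1 K' aa by (simp add: Des_Cons)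
    moreover have "a \<notin> (+) a ` Des K" "a \<notin> (+) a ` Des K1" using Des_sub[of K] Des_sub[of K1] Cons.prems K' by auto
    ultimately have "(+) a ` Des K = (+) a ` Des K1" by (metis insert_ident)
    then have "Des K = Des K1" by (simp add: inj_image_eq_iff)
    then have "K = K1" using Cons.hyps[of K1] Cons.prems K' aa by auto
    then show ?thesis using K' aa by simp
  qed
qed

definition Wd :: "nat \<Rightarrow> nat set \<Rightarrow> nat list" where
  "Wd n S = map (\<lambda>k. Suc (card {d\<in>S. d \<le> k})) [0..<n]"

definition chg :: "nat list \<Rightarrow> nat set" where
  "chg v = {k. 1 \<le> k \<and> k < length v \<and> v ! (k - 1) \<noteq> v ! k}"

lemma length_Wd[simp]: "length (Wd n S) = n" unfolding Wd_def by simp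
lemma nth_Wd: "k < n \<Longrightarrow> Wd n S ! k = Suc (card {d\<in>S. d \<le> k})" unfolding Wd_def by simp

lemma woc_Cons: "word_of_comp (a # K) = replicate a 1 @ map Suc (word_of_comp K)"
  unfolding word_of_comp_def
  by (simp add: enumerate_Suc_eq map_concat comp_def case_prod_beta)

lemma card_le_shift: fixes S :: "nat set" assumes "finite S" and that: "0 \<notin> S"
  shows "card {d \<in> insert a ((+) a ` S). d \<le> a + k} = Suc (card {e\<in>S. e \<le> k})"
proof -
  have "{d \<in> insert a ((+) a ` S). d \<le> a + k} = insert a ((+) a ` {e\<in>S. e \<le> k})" by (auto simp: image_iff)
  moreover have "a \<notin> (+) a ` {e\<in>S. e \<le> k}" using that by auto
  ultimately show ?thesis using assms by (simp add: card_image)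
qed

lemma finite_Des[simp]: "finite (Des K)"
proof -
  have "Des K = (\<lambda>k. sum_list (take k K)) ` {k. 0 < k \<and> k < length K}" unfolding Des_def by auto
  then show ?thesis by simp
qed

lemma woc_Wd: "is_comp K \<Longrightarrow> word_of_comp K = Wd (sum_list K) (Des K)"
proof (induct K)
  case Nil then show ?case by (simp add: word_of_comp_def Wd_def)
next
  case (Cons a K)
  show ?case
  proof (cases "K = []")
    case True
    then show ?thesis by (simp add: word_of_comp_def Wd_def Des_Cons map_replicate_const)
  next
    case False
    note Kne = False
    have IH: "word_of_comp K = Wd (sum_list K) (Des K)" using Cons by simp
    have z: "0 \<notin> Des K" using Des_sub[of K] Cons.prems by auto
    show ?thesis
    proof (rule nth_equalityI)
      show "length (word_of_comp (a # K)) = length (Wd (sum_list (a # K)) (Des (a # K)))"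
        by (simp add: woc_Cons IH)
      fix k assume k: "k < length (word_of_comp (a # K))"
      then have k2: "k < a + sum_list K" by (simp add: woc_Cons IH)
      show "word_of_comp (a # K) ! k = Wd (sum_list (a # K)) (Des (a # K)) ! k"
      proof (cases "k < a")
        case True
        have "{d \<in> Des (a # K). d \<le> k} = {}" using Des_ge[of a K] Cons.prems True by fastforce
        then show ?thesis using True k2 by (simp add: woc_Cons nth_append nth_Wd)
      next
        case False
        then obtain k' where kk: "k = a + k'" by (metis le_add_diff_inverse not_less)
        have "card {d \<in> Des (a # K). d \<le> a + k'} = Suc (card {e\<in>Des K. e \<le> k'})"
          using card_le_shift[OF finite_Des z] Kne by (simp add: Des_Cons)
        then show ?thesis using kk k2 by (simp add: woc_Cons nth_append nth_Wd IH)
      qed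
    qed
  qed
qed

lemma card_le_Suc_split: "card {d\<in>S. d \<le> Suc k} = card {d\<in>S. d \<le> k} + (if Suc k \<in> S then 1 else 0)" if "finite S"
proof -
  have "{d\<in>S. d \<le> Suc k} = {d\<in>S. d \<le> k} \<union> ({Suc k} \<inter> S)" by auto
  then show ?thesis using that by (auto simp: card_Un_disjoint)
qed

lemma chg_Wd: assumes "S \<subseteq> {1..<n}" shows "chg (Wd n S) = S"
proof -
  have fin: "finite S" using assms finite_subset by blast
  have key: "Wd n S ! (k - 1) \<noteq> Wd n S ! k \<longleftrightarrow> k \<in> S" if h: "1 \<le> k" "k < n" for k
  proof -
    obtain k' where "k = Suc k'" using h by (cases k) auto
    then show ?thesis using h card_le_Suc_split[OF fin, of k'] by (simp add: nth_Wd)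
  qed
  show ?thesis
  proof (rule set_eqI)
    fix k show "k \<in> chg (Wd n S) \<longleftrightarrow> k \<in> S"
    proof (cases "1 \<le> k \<and> k < n")
      case True then show ?thesis using key[of k] unfolding chg_def by auto
    next
      case False then show ?thesis using assms unfolding chg_def by auto
    qed
  qed
qed

lemma sorted_Wd: "sorted (Wd n S)" if "finite S"
  unfolding sorted_iff_nth_mono using that by (auto simp: nth_Wd intro!: card_mono)

lemma packed_sorted_Wd: assumes "packed v" "sorted v" shows "v = Wd (length v) (chg v)"
proof (rule nth_equalityI)
  show "length v = length (Wd (length v) (chg v))" by simp
  obtain M where s: "set v = {1..M}" using assms unfolding packed_def by blast
  have fin: "finite (chg v)" unfolding chg_def by simp
  fix k assume "k < length v"
  then show "v ! k = Wd (length v) (chg v) ! k"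
  proof (induct k)
    case 0
    have "M \<ge> 1" using s 0 by (metis atLeastAtMost_iff empty_iff nth_mem length_greater_0_conv list.set(1) not_one_le_zero order.trans nat_le_linear)
    then have "1 \<in> set v" using s by auto
    then obtain j where "j < length v" "v ! j = 1" by (auto simp: in_set_conv_nth)
    moreover have "v ! 0 \<ge> 1" using s 0 nth_mem[of 0 v] by auto
    moreover have "v ! 0 \<le> v ! j" using assms(2) calculation(1) by (simp add: sorted_iff_nth_mono)
    ultimately have "v ! 0 = 1" by linarith
    moreover have "{d \<in> chg v. d \<le> 0} = {}" unfolding chg_def by auto
    ultimately show ?case using 0 by (simp add: nth_Wd)
  next
    case (Suc k)
    have IH: "v ! k = Suc (card {d\<in>chg v. d \<le> k})" using Suc by (simp add: nth_Wd)
    have le: "v ! k \<le> v ! Suc k" using assms(2) Suc.prems by (simp add: sorted_iff_nth_mono)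
    have step: "v ! Suc k = v ! k + (if Suc k \<in> chg v then 1 else 0)"
    proof (cases "v ! k = v ! Suc k")
      case True then show ?thesis unfolding chg_def by auto
    next
      case False
      have "v ! Suc k = Suc (v ! k)"
      proof (rule ccontr)
        assume "v ! Suc k \<noteq> Suc (v ! k)"
        then have lt: "Suc (v ! k) < v ! Suc k" using le False by simp
        have "v ! Suc k \<in> {1..M}" using s Suc.prems nth_mem[of "Suc k" v] by auto
        then have "Suc (v ! k) \<in> set v" using s lt by auto
        then obtain j where j: "j < length v" "v ! j = Suc (v ! k)" by (auto simp: in_set_conv_nth)
        show False
        proof (cases "j \<le> k")
          case True then have "v ! j \<le> v ! k" using assms(2) Suc.prems by (simp add: sorted_iff_nth_mono)
          then show False using j by simp
        next
          case False then have "Suc k \<le> j" by simp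
          then have "v ! Suc k \<le> v ! j" using assms(2) j(1) unfolding sorted_iff_nth_mono by blast
          then show False using j lt by simp
        qed
      qed
      then show ?thesis using False Suc.prems unfolding chg_def by auto
    qed
    show ?case using IH step card_le_Suc_split[OF fin, of k] Suc.prems by (simp add: nth_Wd)
  qed
qed

lemma length_le_sum: "is_comp K \<Longrightarrow> length K \<le> sum_list K"
  by (induct K) auto

lemma finite_comps: "finite {K. is_comp K \<and> sum_list K = n}"
proof -
  have "{K. is_comp K \<and> sum_list K = n} \<subseteq> {xs. set xs \<subseteq> {0..n} \<and> length xs \<le> n}"
    using length_le_sum member_le_sum_list by fastforce
  moreover have "finite {xs. set xs \<subseteq> {0..n} \<and> length xs \<le> n}"
    by (rule finite_lists_length_le) simp
  ultimately show ?thesis by (rule finite_subset)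
qed




lemma map2_diff:
  fixes l :: "nat list"
  assumes st: "sorted_wrt (<) l" and pos: "\<forall>x\<in>set l. 0 < x" and ne: "l \<noteq> []"
  defines "K \<equiv> map2 (\<lambda>a b. a - b) l (0 # l)"
  shows "is_comp K \<and> sum_list K = last l \<and> Des K = set (butlast l)"
proof -
  have lenK: "length K = length l" unfolding K_def by simp
  have nthK: "K ! j = l ! j - (if j = 0 then 0 else l ! (j - 1))" if "j < length l" for j
    unfolding K_def using that by (cases j) auto
  have lt: "l ! (j - 1) < l ! j" if "0 < j" "j < length l" for j
    using st that by (simp add: sorted_wrt_iff_nth_less)
  have ps: "sum_list (take (Suc j) K) = l ! j" if "j < length l" for j
    using that
  proof (induct j)
    case 0 then show ?case using lenK nthK[of 0] ne by (cases K) auto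
  next
    case (Suc j)
    have "take (Suc (Suc j)) K = take (Suc j) K @ [K ! Suc j]" using Suc.prems lenK
      by (simp add: take_Suc_conv_app_nth)
    then show ?case using Suc lt[of "Suc j"] nthK[of "Suc j"] by simp
  qed
  have comp: "is_comp K" unfolding is_comp_def
  proof
    fix x assume "x \<in> set K"
    then obtain j where j: "j < length l" "x = K ! j" using lenK by (auto simp: in_set_conv_nth)
    show "0 < x"
    proof (cases "j = 0")
      case True then show ?thesis using j nthK pos nth_mem[of 0 l] by auto
    next
      case False then show ?thesis using j nthK lt[of j] by auto
    qed
  qed
  have sum: "sum_list K = last l"
  proof -
    have "sum_list K = sum_list (take (Suc (length l - 1)) K)" using lenK ne by simp
    also have "\<dots> = l ! (length l - 1)" using ps[of "length l - 1"] ne by simp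
    finally show ?thesis using ne by (simp add: last_conv_nth)
  qed
  have des: "Des K = set (butlast l)"
  proof -
    have "Des K = {sum_list (take (Suc j) K) | j. j < length l - 1}"
      unfolding Des_def lenK
    proof (rule set_eqI, rule iffI)
      fix x assume "x \<in> {sum_list (take k K) |k. 0 < k \<and> k < length l}"
      then obtain k where "x = sum_list (take k K)" "0 < k" "k < length l" by blast
      then show "x \<in> {sum_list (take (Suc j) K) | j. j < length l - 1}"
        by (intro CollectI exI[of _ "k - 1"]) auto
    next
      fix x assume "x \<in> {sum_list (take (Suc j) K) | j. j < length l - 1}"
      then obtain j where "x = sum_list (take (Suc j) K)" "j < length l - 1" by blast
      then show "x \<in> {sum_list (take k K) |k. 0 < k \<and> k < length l}"
        by (intro CollectI exI[of _ "Suc j"]) auto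
    qed
    also have "\<dots> = {l ! j | j. j < length l - 1}"
    proof -
      have f: "\<And>j. j < length l - 1 \<Longrightarrow> sum_list (take (Suc j) K) = l ! j" using ps by simp
      show ?thesis
      proof (rule set_eqI, rule iffI)
        fix x assume "x \<in> {sum_list (take (Suc j) K) |j. j < length l - 1}"
        then obtain j where "x = sum_list (take (Suc j) K)" "j < length l - 1" by blast
        then show "x \<in> {l ! j |j. j < length l - 1}" using f by (intro CollectI exI[of _ j]) auto
      next
        fix x assume "x \<in> {l ! j |j. j < length l - 1}"
        then obtain j where "x = l ! j" "j < length l - 1" by blast
        then show "x \<in> {sum_list (take (Suc j) K) |j. j < length l - 1}" using f by (intro CollectI exI[of _ j]) auto
      qed
    qed
    also have "\<dots> = set (butlast l)"
    proof -
      have "set (butlast l) = {butlast l ! j | j. j < length (butlast l)}" by (rule set_conv_nth)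
      also have "\<dots> = {l ! j | j. j < length l - 1}"
      proof -
        have f: "\<And>j. j < length l - 1 \<Longrightarrow> butlast l ! j = l ! j" by (simp add: nth_butlast)
        show ?thesis
        proof (rule set_eqI, rule iffI)
          fix x assume "x \<in> {butlast l ! j |j. j < length (butlast l)}"
          then obtain j where "x = butlast l ! j" "j < length (butlast l)" by blast
          then show "x \<in> {l ! j |j. j < length l - 1}" using f by (intro CollectI exI[of _ j]) auto
        next
          fix x assume "x \<in> {l ! j |j. j < length l - 1}"
          then obtain j where "x = l ! j" "j < length l - 1" by blast
          then show "x \<in> {butlast l ! j |j. j < length (butlast l)}" using f by (intro CollectI exI[of _ j]) auto
        qed
      qed
      finally show ?thesis by simp
    qed
    finally show ?thesis .
  qed
  show ?thesis using comp sum des by simp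
qed

lemma cfd_props:
  assumes n: "0 < n" and S: "S \<subseteq> {1..<n}"
  shows "is_comp (comp_from_des n S) \<and> sum_list (comp_from_des n S) = n \<and> Des (comp_from_des n S) = S"
proof -
  let ?A = "insert n S"
  have A: "(S \<union> {n}) \<inter> {0<..n} = ?A" using S n by auto
  have finA: "finite ?A" using S finite_subset by auto
  define l where "l = sorted_list_of_set ?A"
  have st: "sorted_wrt (<) l" unfolding l_def by (rule strict_sorted_list_of_set)
  have setl: "set l = ?A" unfolding l_def by (rule set_sorted_list_of_set[OF finA])
  have ne: "l \<noteq> []" using setl by auto
  have pos: "\<forall>x\<in>set l. 0 < x" using setl S n by auto
  have lastl: "last l = n"
  proof -
    have "last l \<in> ?A" using setl ne last_in_set[of l] by simp
    then have "last l \<le> n" using S by auto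
    moreover have "n \<in> set l" using setl by simp
    then obtain i where i: "i < length l" "l ! i = n" by (auto simp: in_set_conv_nth)
    have "l ! i \<le> l ! (length l - 1)"
    proof (cases "i = length l - 1")
      case False then have "i < length l - 1" using i by simp
      then have "l ! i < l ! (length l - 1)" using st[unfolded sorted_wrt_iff_nth_less, rule_format, of i "length l - 1"] ne by simp
      then show ?thesis by simp
    qed simp
    then have "n \<le> last l" using i ne by (simp add: last_conv_nth)
    ultimately show ?thesis by simp
  qed
  have dl: "distinct l" using st by (simp add: strict_sorted_iff)
  have "set (butlast l) = set l - {last l}"
  proof -
    have "distinct (butlast l @ [last l])" using dl ne by simp
    then have "last l \<notin> set (butlast l)" by simp
    moreover have "set l = set (butlast l @ [last l])" using ne by simp
    ultimately show ?thesis by auto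
  qed
  then have "set (butlast l) = S" using setl lastl S by auto
  moreover have "comp_from_des n S = map2 (\<lambda>a b. a - b) l (0 # l)"
    unfolding comp_from_des_def l_def A by (simp add: Let_def)
  ultimately show ?thesis using map2_diff[OF st pos ne] lastl by simp
qed

lemma WC_iff:
  assumes "0 < length w"
  shows "WC w = J \<longleftrightarrow> is_comp J \<and> sum_list J = length w \<and> Des J = Sz w"
proof -
  have S: "Sz w \<subseteq> {1..<length w}" unfolding Sz_def by auto
  note c = cfd_props[OF assms S]
  show ?thesis unfolding WC_Sz using c comp_inj[of "comp_from_des (length w) (Sz w)" J] by auto
qed




lemma lex_le:
  fixes a b r s P :: nat
  assumes "r < P" "s < P"
  shows "a * P + r \<le> b * P + s \<longleftrightarrow> a < b \<or> (a = b \<and> r \<le> s)"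
proof (cases "a < b")
  case True
  then have "Suc a * P \<le> b * P" by (intro mult_le_mono1) simp
  then show ?thesis using True assms by simp
next
  case False
  show ?thesis
  proof (cases "a = b")
    case True then show ?thesis by simp
  next
    case False2: False
    then have "b < a" using False by simp
    then have "Suc b * P \<le> a * P" by (intro mult_le_mono1) simp
    then show ?thesis using False False2 assms by simp
  qed
qed

lemma lex_eq:
  fixes a b r s P :: nat
  assumes "r < P" "s < P"
  shows "a * P + r = b * P + s \<longleftrightarrow> a = b \<and> r = s"
  using lex_le[OF assms(1,2), of a b] lex_le[OF assms(2,1), of b a] by auto

lemma lex_less:
  fixes a b r s P :: nat
  assumes "r < P" "s < P"
  shows "a * P + r < b * P + s \<longleftrightarrow> a < b \<or> (a = b \<and> r < s)"
  using lex_le[OF assms(2,1), of b a] by auto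

lemma ivt_nat:
  fixes f :: "nat \<Rightarrow> nat"
  assumes step: "\<And>i. a \<le> i \<Longrightarrow> f (Suc i) \<le> Suc (f i)" and "a \<le> c" "f a \<le> b" "b \<le> f c"
  shows "\<exists>i. a \<le> i \<and> i \<le> c \<and> f i = b"
  using assms(2-4)
proof (induct c)
  case 0 then show ?case by auto
next
  case (Suc c)
  show ?case
  proof (cases "a \<le> c \<and> b \<le> f c")
    case True
    then obtain i where "a \<le> i" "i \<le> c" "f i = b" using Suc by auto
    then show ?thesis by (intro exI[of _ i]) auto
  next
    case False
    show ?thesis
    proof (cases "a \<le> c")
      case True
      then have "f c < b" using False by simp
      then have "f (Suc c) = b" using step[OF True] Suc.prems by simp
      then show ?thesis using Suc.prems by (intro exI[of _ "Suc c"]) auto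
    next
      case False
      then have "a = Suc c" using Suc.prems by simp
      then show ?thesis using Suc.prems by (intro exI[of _ "Suc c"]) auto
    qed
  qed
qed

lemma sorted_on_eq_iff:
  assumes so: "sorted_on w a b" and ij: "a \<le> i" "i \<le> j" "j < b"
  shows "w ! i = w ! j \<longleftrightarrow> (\<forall>t. i \<le> t \<longrightarrow> t < j \<longrightarrow> w ! t = w ! Suc t)"
  using ij
proof (induct j)
  case 0 then show ?case by auto
next
  case (Suc j)
  show ?case
  proof (cases "i = Suc j")
    case True then show ?thesis by auto
  next
    case False
    then have ij2: "i \<le> j" using Suc.prems by simp
    have IH: "w ! i = w ! j \<longleftrightarrow> (\<forall>t. i \<le> t \<longrightarrow> t < j \<longrightarrow> w ! t = w ! Suc t)"
      using Suc.hyps ij2 Suc.prems by simp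
    have m1: "w ! i \<le> w ! j" "w ! j \<le> w ! Suc j" using so ij2 Suc.prems unfolding sorted_on_def by auto
    have "w ! i = w ! Suc j \<longleftrightarrow> w ! i = w ! j \<and> w ! j = w ! Suc j" using m1 by auto
    also have "\<dots> \<longleftrightarrow> (\<forall>t. i \<le> t \<longrightarrow> t < Suc j \<longrightarrow> w ! t = w ! Suc t)"
      using IH ij2 by (auto simp: less_Suc_eq)
    finally show ?thesis .
  qed
qed

locale core =
  fixes p n :: nat and E :: "nat set"
  assumes p_pos: "0 < p" and n_pos: "0 < n" and E_sub: "E \<subseteq> {1..<p+n}"
begin

abbreviation "N \<equiv> p + n"
abbreviation "P \<equiv> p + 2"

definition blk :: "nat \<Rightarrow> nat" where "blk i = card {d\<in>E. p < d \<and> d \<le> i}"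
definition mm :: nat where "mm = card {d\<in>E. p < d} + 1"
definition m' :: nat where "m' = card {d\<in>E. p \<le> d}"
definition rr :: "nat \<Rightarrow> nat" where "rr i = card {d\<in>E. d \<le> i}"
definition priv :: "nat list \<Rightarrow> nat \<Rightarrow> bool" where
  "priv c i \<longleftrightarrow> (\<exists>d\<in>E. i < d \<and> d \<le> p \<and> c ! (d - 1) = c ! i)"
definition rp :: "nat list \<Rightarrow> nat \<Rightarrow> nat" where
  "rp c i = (if priv c i then rr i else p + 1)"
definition uf :: "nat list \<Rightarrow> nat \<Rightarrow> nat" where
  "uf c i = (if i < p then c ! i * P + rp c i else blk i * P + (p + 1))"
definition u :: "nat list \<Rightarrow> nat list" where "u c = map (uf c) [0..<N]"

lemma uf_x: "i < p \<Longrightarrow> uf c i = c ! i * P + rp c i" unfolding uf_def by simp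
lemma uf_y: "\<not> i < p \<Longrightarrow> uf c i = blk i * P + (p + 1)" unfolding uf_def by simp

lemma finE: "finite E" using E_sub finite_subset by blast

lemma length_u[simp]: "length (u c) = N" unfolding u_def by simp
lemma nth_u: "i < N \<Longrightarrow> u c ! i = uf c i" unfolding u_def by simp

lemma rr_le: "rr i \<le> i"
proof -
  have "{d\<in>E. d \<le> i} \<subseteq> {1..i}" using E_sub by auto
  then have "rr i \<le> card {1..i}" unfolding rr_def by (intro card_mono) auto
  then show ?thesis by simp
qed

lemma rr_Suc: "rr (Suc i) = rr i + (if Suc i \<in> E then 1 else 0)"
  unfolding rr_def using card_le_Suc_split[OF finE] .

lemma rr_mono: "i \<le> j \<Longrightarrow> rr i \<le> rr j"
  unfolding rr_def by (intro card_mono) (use finE in auto)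

lemma rr_strict: "i < j \<Longrightarrow> Suc i \<in> E \<Longrightarrow> rr i < rr j"
proof -
  assume "i < j" "Suc i \<in> E"
  then have "rr i < rr (Suc i)" using rr_Suc by simp
  also have "\<dots> \<le> rr j" using \<open>i < j\<close> by (intro rr_mono) simp
  finally show ?thesis .
qed

lemma rp_lt: "i < p \<Longrightarrow> rp c i < P" unfolding rp_def using rr_le[of i] by auto
lemma rp_le: "i < p \<Longrightarrow> rp c i \<le> p + 1" unfolding rp_def using rr_le[of i] by auto

lemma blk_low: "i \<le> p \<Longrightarrow> blk i = 0" unfolding blk_def by auto

lemma blk_Suc: "p \<le> i \<Longrightarrow> blk (Suc i) = blk i + (if Suc i \<in> E then 1 else 0)"
proof -
  assume pi: "p \<le> i"
  have "{d\<in>E. p < d \<and> d \<le> Suc i} = {d\<in>E. p < d \<and> d \<le> i} \<union> ({Suc i} \<inter> E)" using pi by auto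
  then show ?thesis unfolding blk_def using finE by (auto simp: card_Un_disjoint)
qed

lemma blk_mono: "i \<le> j \<Longrightarrow> blk i \<le> blk j"
  unfolding blk_def by (intro card_mono) (use finE in auto)

lemma blk_strict: "p \<le> i \<Longrightarrow> i < j \<Longrightarrow> Suc i \<in> E \<Longrightarrow> blk i < blk j"
proof -
  assume "p \<le> i" "i < j" "Suc i \<in> E"
  then have "blk i < blk (Suc i)" using blk_Suc by simp
  also have "\<dots> \<le> blk j" using \<open>i < j\<close> by (intro blk_mono) simp
  finally show ?thesis .
qed

lemma blk_last: "blk (N - 1) = mm - 1"
proof -
  have "{d\<in>E. p < d \<and> d \<le> N - 1} = {d\<in>E. p < d}" using E_sub by auto
  then show ?thesis unfolding blk_def mm_def by simp
qed

lemma mm_pos: "0 < mm" unfolding mm_def by simp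

lemma blk_lt_mm: "i < N \<Longrightarrow> blk i < mm"
proof -
  assume "i < N"
  then have "i \<le> N - 1" by simp
  then have "blk i \<le> mm - 1" using blk_mono[of i "N - 1"] blk_last by simp
  then show ?thesis using mm_pos by simp
qed


lemma m'_eq: "m' = mm - 1 + (if p \<in> E then 1 else 0)"
proof -
  have "{d\<in>E. p \<le> d} = {d\<in>E. p < d} \<union> ({p} \<inter> E)" by auto
  then show ?thesis unfolding m'_def mm_def using finE by (auto simp: card_Un_disjoint)
qed

lemma m'_le: "m' \<le> mm" using m'_eq mm_pos by simp

lemma blk_surj: "b < mm \<Longrightarrow> \<exists>i. p \<le> i \<and> i < N \<and> blk i = b"
proof -
  assume b: "b < mm"
  have "\<exists>i. p \<le> i \<and> i \<le> N - 1 \<and> blk i = b"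
    by (rule ivt_nat[of p blk]) (use blk_Suc blk_low blk_last b n_pos in auto)
  then show ?thesis using n_pos by fastforce
qed


definition LL :: "nat set" where "LL = {j. p \<le> j \<and> j < N \<and> (Suc j = N \<or> Suc j \<in> E)}"

lemma blk_inj_L: "inj_on blk LL"
proof (rule inj_onI)
  have key: "blk j < blk j'" if "j \<in> LL" "j' \<in> LL" "j < j'" for j j'
  proof -
    have "Suc j \<in> E" using that unfolding LL_def by auto
    then show ?thesis using blk_strict[of j j'] that unfolding LL_def by auto
  qed
  fix j j' assume "j \<in> LL" "j' \<in> LL" "blk j = blk j'"
  then show "j = j'" using key[of j j'] key[of j' j] by (cases "j < j'"; cases "j' < j") auto
qed

lemma blk_L_image: "blk ` LL = {..<mm}"
proof
  show "blk ` LL \<subseteq> {..<mm}" using blk_lt_mm unfolding LL_def by auto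
next
  show "{..<mm} \<subseteq> blk ` LL"
  proof
    fix b assume "b \<in> {..<mm}"
    then obtain i where i: "p \<le> i" "i < N" "blk i = b" using blk_surj by auto
    define Sb where "Sb = {j. p \<le> j \<and> j < N \<and> blk j = b}"
    have fin: "finite Sb" unfolding Sb_def by simp
    have ne: "Sb \<noteq> {}" using i unfolding Sb_def by auto
    define j0 where "j0 = Max Sb"
    have j0: "j0 \<in> Sb" unfolding j0_def using Max_in[OF fin ne] .
    have mx: "j \<le> j0" if "j \<in> Sb" for j unfolding j0_def using Max_ge[OF fin that] .
    have "j0 \<in> LL"
    proof (rule ccontr)
      assume "j0 \<notin> LL"
      then have "Suc j0 < N" "Suc j0 \<notin> E" using j0 unfolding LL_def Sb_def by auto
      then have "Suc j0 \<in> Sb" using j0 blk_Suc[of j0] unfolding Sb_def by auto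
      then show False using mx[of "Suc j0"] by simp
    qed
    then show "b \<in> blk ` LL" using j0 unfolding Sb_def by auto
  qed
qed

lemma blk_image_y: "blk ` {p..<N} = {..<mm}"
proof
  show "blk ` {p..<N} \<subseteq> {..<mm}" using blk_lt_mm by auto
  show "{..<mm} \<subseteq> blk ` {p..<N}" using blk_surj by fastforce
qed

definition goodc :: "nat list \<Rightarrow> bool" where
  "goodc c \<longleftrightarrow> length c = p \<and> (\<forall>i j. i \<le> j \<longrightarrow> j < p \<longrightarrow> c ! i \<le> c ! j) \<and> (\<forall>i<p. c ! i \<le> m')"

lemma goodc_Cset: "c \<in> Cset p m' \<longleftrightarrow> goodc c"
proof
  assume "c \<in> Cset p m'"
  then show "goodc c" unfolding Cset_def goodc_def by (auto simp: sorted_iff_nth_mono)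
next
  assume g: "goodc c"
  then have "\<forall>x\<in>set c. x \<le> m'" unfolding goodc_def by (auto simp: in_set_conv_nth)
  then show "c \<in> Cset p m'" using g unfolding Cset_def goodc_def by (auto simp: sorted_iff_nth_mono)
qed

context
  fixes c assumes gc: "goodc c"
begin

lemma csort: "i \<le> j \<Longrightarrow> j < p \<Longrightarrow> c ! i \<le> c ! j" using gc unfolding goodc_def by blast
lemma cbound: "i < p \<Longrightarrow> c ! i \<le> m'" using gc unfolding goodc_def by blast

lemma priv_mono: "i \<le> j \<Longrightarrow> j < p \<Longrightarrow> c ! i = c ! j \<Longrightarrow> priv c j \<Longrightarrow> priv c i"
  unfolding priv_def by (metis le_less_trans)

lemma priv_step: "Suc t < p \<Longrightarrow> Suc t \<notin> E \<Longrightarrow> c ! t = c ! Suc t \<Longrightarrow> priv c t \<longleftrightarrow> priv c (Suc t)"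
proof
  assume h: "Suc t < p" "Suc t \<notin> E" "c ! t = c ! Suc t" "priv c t"
  then obtain d where d: "d \<in> E" "t < d" "d \<le> p" "c ! (d - 1) = c ! t" unfolding priv_def by blast
  then have "Suc t < d" using h(2) by (metis Suc_lessI)
  then show "priv c (Suc t)" unfolding priv_def using d h(3) by auto
next
  assume h: "Suc t < p" "Suc t \<notin> E" "c ! t = c ! Suc t" "priv c (Suc t)"
  then show "priv c t" using priv_mono[of t "Suc t"] by simp
qed

lemma priv_E: "t < p \<Longrightarrow> Suc t \<in> E \<Longrightarrow> priv c t"
  unfolding priv_def by (intro bexI[of _ "Suc t"]) auto

lemma notpriv_lt: assumes "i < p" "\<not> priv c i" shows "c ! i < mm"
proof (cases "p \<in> E")
  case True
  have "c ! i \<noteq> m'"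
  proof
    assume eq: "c ! i = m'"
    have "c ! (p - 1) = c ! i" using csort[of i "p - 1"] cbound[of "p - 1"] eq assms p_pos by simp
    then have "priv c i" unfolding priv_def using True assms by (intro bexI[of _ p]) auto
    then show False using assms by simp
  qed
  then show ?thesis using cbound[of i] assms m'_eq True mm_pos by simp
next
  case False
  then show ?thesis using cbound[of i] assms m'_eq mm_pos by simp
qed

lemma U4: assumes "Suc t < p"
  shows "uf c t \<noteq> uf c (Suc t) \<longleftrightarrow> (Suc t \<in> E \<or> c ! t < c ! Suc t)"
proof -
  have t: "t < p" using assms by simp
  have eq: "uf c t = uf c (Suc t) \<longleftrightarrow> c ! t = c ! Suc t \<and> rp c t = rp c (Suc t)"
    unfolding uf_x[OF t] uf_x[OF assms] by (rule lex_eq[OF rp_lt[OF t] rp_lt[OF assms]])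
  have le: "c ! t \<le> c ! Suc t" using csort assms by simp
  show ?thesis
  proof (cases "c ! t = c ! Suc t")
    case False then show ?thesis using eq le by auto
  next
    case True
    show ?thesis
    proof (cases "Suc t \<in> E")
      case inE: True
      have pt: "priv c t" using priv_E[OF t inE] .
      have "rp c t \<noteq> rp c (Suc t)"
      proof (cases "priv c (Suc t)")
        case True then show ?thesis using pt rr_Suc[of t] inE unfolding rp_def by simp
      next
        case False then show ?thesis using pt rr_le[of t] t unfolding rp_def by simp
      qed
      then show ?thesis using eq inE by simp
    next
      case notE: False
      have "priv c t \<longleftrightarrow> priv c (Suc t)" using priv_step[OF assms notE True] .
      moreover have "rr (Suc t) = rr t" using rr_Suc[of t] notE by simp
      ultimately have "rp c t = rp c (Suc t)" unfolding rp_def by simp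
      then show ?thesis using eq True notE by simp
    qed
  qed
qed

lemma U6a: assumes "i < p" "p \<le> j" shows "uf c i \<le> uf c j \<longleftrightarrow> c ! i \<le> blk j"
proof -
  have nj: "\<not> j < p" using assms by simp
  have "c ! i * P + rp c i \<le> blk j * P + (p + 1) \<longleftrightarrow> c ! i < blk j \<or> (c ! i = blk j \<and> rp c i \<le> p + 1)"
    by (rule lex_le) (use rp_lt[OF assms(1)] in auto)
  then show ?thesis unfolding uf_x[OF assms(1)] uf_y[OF nj] using rp_le[OF assms(1)] by auto
qed

lemma U6b: assumes "i < p" "p \<le> j"
  shows "uf c j \<le> uf c i \<longleftrightarrow> (blk j < c ! i \<or> (blk j = c ! i \<and> \<not> priv c i))"
proof -
  have nj: "\<not> j < p" using assms by simp
  have "blk j * P + (p + 1) \<le> c ! i * P + rp c i \<longleftrightarrow> blk j < c ! i \<or> (blk j = c ! i \<and> p + 1 \<le> rp c i)"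
    by (rule lex_le) (use rp_lt[OF assms(1)] in auto)
  moreover have "p + 1 \<le> rp c i \<longleftrightarrow> \<not> priv c i" unfolding rp_def using rr_le[of i] assms by auto
  ultimately show ?thesis unfolding uf_x[OF assms(1)] uf_y[OF nj] by simp
qed

lemma U7: assumes "p \<le> t" shows "uf c t \<noteq> uf c (Suc t) \<longleftrightarrow> Suc t \<in> E"
proof -
  have n1: "\<not> t < p" "\<not> Suc t < p" using assms by auto
  have "blk t * P + (p + 1) = blk (Suc t) * P + (p + 1) \<longleftrightarrow> blk t = blk (Suc t) \<and> p + 1 = p + 1"
    by (rule lex_eq) auto
  then show ?thesis unfolding uf_y[OF n1(1)] uf_y[OF n1(2)] using blk_Suc[OF assms] by auto
qed

lemma U_xsorted: "sorted_on (u c) 0 p"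
  unfolding sorted_on_def
proof (intro allI impI)
  fix i j assume h: "0 \<le> i" "i \<le> j" "j < p"
  have ip: "i < p" using h by simp
  have le: "c ! i \<le> c ! j" using csort h by simp
  have "rp c i \<le> rp c j" if eq: "c ! i = c ! j"
  proof (cases "priv c j")
    case True
    then have "priv c i" using priv_mono[OF h(2,3) eq] by simp
    then show ?thesis using True rr_mono[OF h(2)] unfolding rp_def by simp
  next
    case False then show ?thesis using rp_le[OF ip] h unfolding rp_def by auto
  qed
  moreover have "c ! i * P + rp c i \<le> c ! j * P + rp c j \<longleftrightarrow> c ! i < c ! j \<or> (c ! i = c ! j \<and> rp c i \<le> rp c j)"
    by (rule lex_le) (use rp_lt[OF ip] rp_lt[OF h(3)] in auto)
  ultimately have "uf c i \<le> uf c j" unfolding uf_x[OF ip] uf_x[OF h(3)] using le by auto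
  then show "u c ! i \<le> u c ! j" using h by (simp add: nth_u)
qed

lemma U_ysorted: "sorted_on (u c) p N"
  unfolding sorted_on_def
proof (intro allI impI)
  fix i j assume h: "p \<le> i" "i \<le> j" "j < N"
  have n1: "\<not> i < p" "\<not> j < p" using h by auto
  have "blk i * P + (p + 1) \<le> blk j * P + (p + 1) \<longleftrightarrow> blk i < blk j \<or> (blk i = blk j \<and> p + 1 \<le> p + 1)"
    by (rule lex_le) auto
  then have "uf c i \<le> uf c j" unfolding uf_y[OF n1(1)] uf_y[OF n1(2)] using blk_mono[OF h(2)] by auto
  then show "u c ! i \<le> u c ! j" using h by (simp add: nth_u)
qed

lemma ys_uf: assumes "p \<le> i" "i \<le> j" "j < N" shows "uf c i \<le> uf c j"
proof -
  have "u c ! i \<le> u c ! j" using U_ysorted assms unfolding sorted_on_def by auto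
  then show ?thesis using assms by (simp add: nth_u)
qed
lemma xs_uf: assumes "i \<le> j" "j < p" shows "uf c i \<le> uf c j"
proof -
  have "u c ! i \<le> u c ! j" using U_xsorted assms unfolding sorted_on_def by auto
  then show ?thesis using assms by (simp add: nth_u)
qed

lemma U_Sz: "Sz (u c) = E"
proof (rule set_eqI)
  fix k
  have main: "u c ! (k - 1) \<in> set (drop k (u c)) \<longleftrightarrow> k \<notin> E" if k: "1 \<le> k" "k < N" for k
  proof -
    have later: "u c ! (k - 1) \<in> set (drop k (u c)) \<longleftrightarrow> (\<exists>j. k \<le> j \<and> j < N \<and> uf c j = uf c (k - 1))"
      unfolding in_set_drop_iff using k by (auto simp: nth_u)
    show ?thesis
    proof (cases "p < k")
      case True
      obtain t where t: "k = Suc t" "p \<le> t" using True k by (cases k) auto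
      show ?thesis
      proof
        assume "u c ! (k - 1) \<in> set (drop k (u c))"
        then obtain j where j: "k \<le> j" "j < N" "uf c j = uf c t" using later t by auto
        show "k \<notin> E"
        proof
          assume kE: "k \<in> E"
          have "uf c t \<noteq> uf c k" using U7[OF t(2)] kE t by simp
          moreover have "uf c t \<le> uf c k" "uf c k \<le> uf c j"
            using ys_uf[of t k] ys_uf[of k j] k j t by auto
          ultimately show False using j by simp
        qed
      next
        assume "k \<notin> E"
        then have "uf c k = uf c t" using U7[OF t(2)] t by simp
        then show "u c ! (k - 1) \<in> set (drop k (u c))" using later k t by auto
      qed
    next
      case False
      obtain t where t: "k = Suc t" "t < p" using False k by (cases k) auto
      show ?thesis
      proof (cases "priv c t")
        case pt: True
        show ?thesis
        proof
          assume "u c ! (k - 1) \<in> set (drop k (u c))"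
          then obtain j where j: "k \<le> j" "j < N" "uf c j = uf c t" using later t by auto
          show "k \<notin> E"
          proof
            assume kE: "k \<in> E"
            have rt: "rp c t = rr t" "rr t < p" using pt rr_le[of t] t unfolding rp_def by auto
            show False
            proof (cases "j < p")
              case True
              have "c ! j * P + rp c j = c ! t * P + rp c t \<longleftrightarrow> c ! j = c ! t \<and> rp c j = rp c t"
                by (rule lex_eq) (use rp_lt[OF True] rp_lt[OF t(2)] in auto)
              then have "rp c j = rr t" using j rt unfolding uf_x[OF True] uf_x[OF t(2)] by simp
              moreover have "rr t < rr j" using rr_strict[of t j] kE t j by simp
              ultimately show False unfolding rp_def using rt by (auto split: if_splits)
            next
              case False
              have "blk j * P + (p + 1) = c ! t * P + rp c t \<longleftrightarrow> blk j = c ! t \<and> p + 1 = rp c t"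
                by (rule lex_eq) (use rp_lt[OF t(2)] in auto)
              then show False using j rt unfolding uf_y[OF False] uf_x[OF t(2)] by simp
            qed
          qed
        next
          assume kE: "k \<notin> E"
          obtain d where d: "d \<in> E" "t < d" "d \<le> p" "c ! (d - 1) = c ! t" using pt unfolding priv_def by blast
          have "d \<noteq> k" using d kE by auto
          then have kd: "k < d" using d t by simp
          then have kp: "Suc t < p" using d t by simp
          have "c ! k \<le> c ! (d - 1)" using csort[of k "d - 1"] kd d by simp
          moreover have "c ! t \<le> c ! k" using csort[of t k] kp t by simp
          ultimately have "c ! t = c ! Suc t" using d t by simp
          then have "uf c t = uf c (Suc t)" using U4[OF kp] kE t by auto
          then show "u c ! (k - 1) \<in> set (drop k (u c))" using later k t kp by auto
        qed
      next
        case npt: False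
        have kE: "k \<notin> E" using priv_E[OF t(2)] npt t by auto
        have "c ! t < mm" using notpriv_lt[OF t(2) npt] .
        then obtain j where j: "p \<le> j" "j < N" "blk j = c ! t" using blk_surj by blast
        have nj: "\<not> j < p" using j by simp
        have "uf c j = uf c t" unfolding uf_y[OF nj] uf_x[OF t(2)] rp_def using npt j by simp
        then have "u c ! (k - 1) \<in> set (drop k (u c))" using later k t j by auto
        then show ?thesis using kE by simp
      qed
    qed
  qed
  show "k \<in> Sz (u c) \<longleftrightarrow> k \<in> E"
  proof (cases "1 \<le> k \<and> k < N")
    case True then show ?thesis using main[of k] unfolding Sz_def by auto
  next
    case False then show ?thesis using E_sub unfolding Sz_def by auto
  qed
qed

lemma card_blk_L: assumes "x \<le> mm" shows "card {j\<in>LL. blk j < x} = x"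
proof -
  have "card {j\<in>LL. blk j < x} = card (blk ` {j\<in>LL. blk j < x})"
    by (rule card_image[symmetric]) (rule inj_on_subset[OF blk_inj_L], auto)
  also have "blk ` {j\<in>LL. blk j < x} = {b\<in>blk ` LL. b < x}" by auto
  also have "\<dots> = {..<x}" using blk_L_image assms by auto
  finally show ?thesis by simp
qed

lemma U_sinv: "sinv (u c) = sum_list c"
proof -
  let ?Q = "{(i, j). i < j \<and> j < length (u c) \<and> u c ! j < u c ! i \<and> u c ! j \<notin> set (drop (Suc j) (u c))}"
  have Q: "?Q = Sigma {..<p} (\<lambda>i. {j\<in>LL. blk j < c ! i})"
  proof (rule set_eqI)
    fix x :: "nat \<times> nat"
    obtain i j where x: "x = (i, j)" by (cases x)
    have later: "u c ! j \<in> set (drop (Suc j) (u c)) \<longleftrightarrow> (\<exists>j'. Suc j \<le> j' \<and> j' < N \<and> uf c j' = uf c j)"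
      if "j < N" unfolding in_set_drop_iff using that by (auto simp: nth_u)
    have "(i < j \<and> j < N \<and> uf c j < uf c i \<and> u c ! j \<notin> set (drop (Suc j) (u c))) \<longleftrightarrow>
          (i < p \<and> j \<in> LL \<and> blk j < c ! i)"
    proof
      assume h: "i < j \<and> j < N \<and> uf c j < uf c i \<and> u c ! j \<notin> set (drop (Suc j) (u c))"
      have jp: "p \<le> j"
      proof (rule ccontr)
        assume "\<not> p \<le> j"
        then have "uf c i \<le> uf c j" using xs_uf[of i j] h by simp
        then show False using h by simp
      qed
      have ip: "i < p"
      proof (rule ccontr)
        assume "\<not> i < p"
        then have "uf c i \<le> uf c j" using ys_uf[of i j] h by simp
        then show False using h by simp
      qed
      have b: "blk j < c ! i" using U6a[OF ip jp] h by simp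
      have "j \<in> LL"
      proof (rule ccontr)
        assume "j \<notin> LL"
        then have "Suc j < N" "Suc j \<notin> E" using h jp unfolding LL_def by auto
        then have "uf c (Suc j) = uf c j" using U7[OF jp] by simp
        then show False using h later \<open>Suc j < N\<close> by auto
      qed
      then show "i < p \<and> j \<in> LL \<and> blk j < c ! i" using ip b by simp
    next
      assume h: "i < p \<and> j \<in> LL \<and> blk j < c ! i"
      have j: "p \<le> j" "j < N" using h unfolding LL_def by auto
      have ij: "i < j" using h j by simp
      have lt: "uf c j < uf c i" using U6a[of i j] h j by simp
      have nl: "\<not> (\<exists>j'. Suc j \<le> j' \<and> j' < N \<and> uf c j' = uf c j)"
      proof
        assume "\<exists>j'. Suc j \<le> j' \<and> j' < N \<and> uf c j' = uf c j"
        then obtain j' where j': "Suc j \<le> j'" "j' < N" "uf c j' = uf c j" by blast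
        then have sE: "Suc j \<in> E" "Suc j < N" using h unfolding LL_def by auto
        have "uf c j \<noteq> uf c (Suc j)" using U7[OF j(1)] sE by simp
        moreover have "uf c j \<le> uf c (Suc j)" "uf c (Suc j) \<le> uf c j'"
          using ys_uf[of j "Suc j"] ys_uf[of "Suc j" j'] j j' by auto
        ultimately show False using j' by simp
      qed
      show "i < j \<and> j < N \<and> uf c j < uf c i \<and> u c ! j \<notin> set (drop (Suc j) (u c))"
        using ij j lt nl later by auto
    qed
    then show "x \<in> ?Q \<longleftrightarrow> x \<in> Sigma {..<p} (\<lambda>i. {j\<in>LL. blk j < c ! i})"
      unfolding x by (auto simp: nth_u)
  qed
  have finL: "finite LL" unfolding LL_def by simp
  have "card ?Q = (\<Sum>i<p. card {j\<in>LL. blk j < c ! i})"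
    unfolding Q by (rule card_SigmaI) (use finL in auto)
  also have "\<dots> = (\<Sum>i<p. c ! i)"
  proof (rule sum.cong)
    fix x assume "x \<in> {..<p}"
    then have "c ! x \<le> mm" using cbound[of x] m'_le by simp
    then show "card {j\<in>LL. blk j < c ! x} = c ! x" by (rule card_blk_L)
  qed simp
  also have "\<dots> = sum_list c" using gc unfolding goodc_def by (simp add: sum_list_sum_nth atLeast0LessThan)
  finally show ?thesis unfolding sinv_def by simp
qed

lemma set_drop_image: "set (drop k w) = (!) w ` {k..<length w}"
proof (rule set_eqI)
  fix x
  show "x \<in> set (drop k w) \<longleftrightarrow> x \<in> (!) w ` {k..<length w}"
    unfolding in_set_drop_iff image_iff atLeastLessThan_iff by fastforce
qed

lemma U_cz: assumes ip: "i < p" shows "card {v\<in>set (drop p (u c)). v < u c ! i} = c ! i"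
proof -
  define f where "f b = b * P + (p + 1)" for b
  have "set (drop p (u c)) = (uf c) ` {p..<N}" unfolding set_drop_image by (auto simp: nth_u image_iff)
  also have "\<dots> = f ` blk ` {p..<N}" unfolding f_def by (auto simp: uf_y image_iff)
  also have "\<dots> = f ` {..<mm}" using blk_image_y by simp
  finally have s: "set (drop p (u c)) = f ` {..<mm}" .
  have lt: "f b < uf c i \<longleftrightarrow> b < c ! i" for b
  proof -
    have "b * P + (p + 1) < c ! i * P + rp c i \<longleftrightarrow> b < c ! i \<or> (b = c ! i \<and> p + 1 < rp c i)"
      by (rule lex_less) (use rp_lt[OF ip] in auto)
    then show ?thesis unfolding f_def uf_x[OF ip] using rp_le[OF ip, of c] by auto
  qed
  have "{v\<in>set (drop p (u c)). v < u c ! i} = f ` {b\<in>{..<mm}. b < c ! i}"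
    unfolding s using lt ip by (auto simp: nth_u)
  moreover have "inj f"
  proof (rule injI)
    fix x y assume "f x = f y"
    then show "x = y" using lex_eq[of "p + 1" "p + 2" "p + 1" x y] unfolding f_def by simp
  qed
  ultimately have "card {v\<in>set (drop p (u c)). v < u c ! i} = card {b\<in>{..<mm}. b < c ! i}"
    by (simp add: card_image inj_on_subset)
  also have "{b\<in>{..<mm}. b < c ! i} = {..<c ! i}" using cbound[OF ip] m'_le by auto
  finally show ?thesis by simp
qed

end

definition Zs :: "nat list set" where
  "Zs = {z. length z = N \<and> packed z \<and> Sz z = E \<and> sorted_on z 0 p \<and> sorted_on z p N}"

definition cz :: "nat list \<Rightarrow> nat list" where
  "cz z = map (\<lambda>i. card {v\<in>set (drop p z). v < z ! i}) [0..<p]"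

definition rkY :: "nat list \<Rightarrow> nat \<Rightarrow> nat" where
  "rkY z x = card {v\<in>set (drop p z). v < x}"

lemma rkY_mono: "x \<le> y \<Longrightarrow> rkY z x \<le> rkY z y"
  unfolding rkY_def by (intro card_mono) auto

lemma rkY_strict: assumes "x \<in> set (drop p z)" "x < y" shows "Suc (rkY z x) \<le> rkY z y"
proof -
  have "insert x {v\<in>set (drop p z). v < x} \<subseteq> {v\<in>set (drop p z). v < y}" using assms by auto
  then have "card (insert x {v\<in>set (drop p z). v < x}) \<le> rkY z y" unfolding rkY_def by (intro card_mono) auto
  then show ?thesis unfolding rkY_def by simp
qed

lemma nth_cz: "i < p \<Longrightarrow> cz z ! i = rkY z (z ! i)" unfolding cz_def rkY_def by simp

context
  fixes z assumes zZ: "z \<in> Zs"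
begin

lemma zlen: "length z = N" using zZ unfolding Zs_def by simp
lemma zxs: "i \<le> j \<Longrightarrow> j < p \<Longrightarrow> z ! i \<le> z ! j" using zZ unfolding Zs_def sorted_on_def by auto
lemma zys: "p \<le> i \<Longrightarrow> i \<le> j \<Longrightarrow> j < N \<Longrightarrow> z ! i \<le> z ! j" using zZ unfolding Zs_def sorted_on_def by auto
lemma zS: "1 \<le> k \<Longrightarrow> k < N \<Longrightarrow> k \<in> E \<longleftrightarrow> (\<forall>j. k \<le> j \<longrightarrow> j < N \<longrightarrow> z ! j \<noteq> z ! (k - 1))"
  using zZ zlen unfolding Zs_def Sz_def in_set_drop_iff by auto
lemma inY: "v \<in> set (drop p z) \<longleftrightarrow> (\<exists>j. p \<le> j \<and> j < N \<and> z ! j = v)"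
  unfolding in_set_drop_iff zlen ..
lemma inYj: "p \<le> j \<Longrightarrow> j < N \<Longrightarrow> z ! j \<in> set (drop p z)" using inY by auto

lemma Z1: "p \<le> j \<Longrightarrow> j < N \<Longrightarrow> rkY z (z ! j) = blk j"
proof (induct j)
  case 0 then show ?case using p_pos by simp
next
  case (Suc j)
  show ?case
  proof (cases "p \<le> j")
    case False
    then have jp: "Suc j = p" using Suc.prems by simp
    have "{v\<in>set (drop p z). v < z ! p} = {}"
    proof -
      have "\<not> v < z ! p" if vY: "v \<in> set (drop p z)" for v
      proof -
        obtain j' where "p \<le> j'" "j' < N" "z ! j' = v" using vY inY by auto
        then show ?thesis using zys[of p j'] by simp
      qed
      then show ?thesis by auto
    qed
    then show ?thesis using jp blk_low[of p] unfolding rkY_def by simp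
  next
    case True
    have IH: "rkY z (z ! j) = blk j" using Suc True by simp
    show ?thesis
    proof (cases "Suc j \<in> E")
      case True2: True
      have ne: "z ! j \<noteq> z ! Suc j" using zS[of "Suc j"] True2 Suc.prems by auto
      have le: "z ! j \<le> z ! Suc j" using zys[of j "Suc j"] True Suc.prems by simp
      have "{v\<in>set (drop p z). v < z ! Suc j} = insert (z ! j) {v\<in>set (drop p z). v < z ! j}"
      proof (rule set_eqI, rule iffI)
        fix v assume v: "v \<in> {v\<in>set (drop p z). v < z ! Suc j}"
        then obtain j' where j': "p \<le> j'" "j' < N" "z ! j' = v" using inY by auto
        have "j' \<le> j"
        proof (rule ccontr)
          assume "\<not> j' \<le> j"
          then have "z ! Suc j \<le> z ! j'" using zys[of "Suc j" j'] j' True by simp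
          then show False using v j' by simp
        qed
        then have "v \<le> z ! j" using zys[of j' j] j' True Suc.prems by simp
        then show "v \<in> insert (z ! j) {v\<in>set (drop p z). v < z ! j}" using v by auto
      next
        fix v assume "v \<in> insert (z ! j) {v\<in>set (drop p z). v < z ! j}"
        then show "v \<in> {v\<in>set (drop p z). v < z ! Suc j}" using ne le inYj[of j] True Suc.prems by auto
      qed
      then have "rkY z (z ! Suc j) = Suc (rkY z (z ! j))" unfolding rkY_def by simp
      then show ?thesis using IH blk_Suc[OF True] True2 by simp
    next
      case False2: False
      obtain j' where j': "Suc j \<le> j'" "j' < N" "z ! j' = z ! j" using zS[of "Suc j"] False2 Suc.prems by auto
      have "z ! j \<le> z ! Suc j" "z ! Suc j \<le> z ! j'" using zys[of j "Suc j"] zys[of "Suc j" j'] True Suc.prems j' by auto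
      then have "z ! Suc j = z ! j" using j' by simp
      then show ?thesis using IH blk_Suc[OF True] False2 by simp
    qed
  qed
qed

lemma finY: "finite (set (drop p z))" by simp

lemma Z2: "card (set (drop p z)) = mm"
proof -
  have N1: "p \<le> N - 1" "N - 1 < N" using n_pos by auto
  have "set (drop p z) = insert (z ! (N - 1)) {v\<in>set (drop p z). v < z ! (N - 1)}"
  proof (rule set_eqI, rule iffI)
    fix v assume "v \<in> set (drop p z)"
    then obtain j where "p \<le> j" "j < N" "z ! j = v" using inY by auto
    then have "v \<le> z ! (N - 1)" using zys[of j "N - 1"] by simp
    then show "v \<in> insert (z ! (N - 1)) {v\<in>set (drop p z). v < z ! (N - 1)}" using \<open>v \<in> set (drop p z)\<close> by auto
  next
    fix v assume "v \<in> insert (z ! (N - 1)) {v\<in>set (drop p z). v < z ! (N - 1)}"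
    then show "v \<in> set (drop p z)" using inYj[OF N1] by auto
  qed
  then have "card (set (drop p z)) = Suc (rkY z (z ! (N - 1)))" unfolding rkY_def
    by (metis (no_types, lifting) card_insert_disjoint finY finite_subset mem_Collect_eq less_irrefl subsetI)
  then show ?thesis using Z1[OF N1] blk_last mm_pos by simp
qed

lemma Z3: "goodc (cz z)"
proof -
  have len: "length (cz z) = p" unfolding cz_def by simp
  have srt: "cz z ! i \<le> cz z ! j" if "i \<le> j" "j < p" for i j
    using that rkY_mono[OF zxs[OF that]] by (simp add: nth_cz)
  have bnd: "cz z ! i \<le> m'" if ip: "i < p" for i
  proof (cases "p \<in> E")
    case True
    have "rkY z (z ! i) \<le> card (set (drop p z))" unfolding rkY_def by (intro card_mono) auto
    then show ?thesis using Z2 m'_eq True mm_pos ip by (simp add: nth_cz)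
  next
    case False
    have p1: "1 \<le> p" "p < N" using p_pos n_pos by auto
    obtain j where j: "p \<le> j" "j < N" "z ! j = z ! (p - 1)" using zS[OF p1] False by auto
    have yin: "z ! (p - 1) \<in> set (drop p z)" using inYj[OF j(1,2)] j by simp
    have "z ! i \<le> z ! (p - 1)" using zxs[of i "p - 1"] ip by simp
    then have "{v\<in>set (drop p z). v < z ! i} \<subseteq> set (drop p z) - {z ! (p - 1)}" by auto
    then have "rkY z (z ! i) \<le> card (set (drop p z) - {z ! (p - 1)})" unfolding rkY_def by (intro card_mono) auto
    also have "\<dots> = mm - 1" using Z2 yin by simp
    finally show ?thesis using m'_eq False ip by (simp add: nth_cz)
  qed
  show ?thesis unfolding goodc_def using len srt bnd by blast
qed

lemma Z4: assumes "Suc t < p"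
  shows "z ! t \<noteq> z ! Suc t \<longleftrightarrow> (Suc t \<in> E \<or> cz z ! t < cz z ! Suc t)"
proof -
  have t: "t < p" using assms by simp
  have le: "z ! t \<le> z ! Suc t" using zxs[of t "Suc t"] assms by simp
  show ?thesis
  proof
    assume ne: "z ! t \<noteq> z ! Suc t"
    show "Suc t \<in> E \<or> cz z ! t < cz z ! Suc t"
    proof (cases "Suc t \<in> E")
      case True then show ?thesis by simp
    next
      case nE: False
      obtain j where j: "Suc t \<le> j" "j < N" "z ! j = z ! t" using zS[of "Suc t"] nE assms by auto
      have jp: "p \<le> j"
      proof (rule ccontr)
        assume "\<not> p \<le> j"
        then have "z ! Suc t \<le> z ! j" using zxs[of "Suc t" j] j by simp
        then show False using j le ne by simp
      qed
      have "z ! t \<in> set (drop p z)" using inYj[OF jp j(2)] j by simp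
      then have "Suc (rkY z (z ! t)) \<le> rkY z (z ! Suc t)" using rkY_strict le ne by simp
      then show ?thesis using t assms by (simp add: nth_cz)
    qed
  next
    assume "Suc t \<in> E \<or> cz z ! t < cz z ! Suc t"
    then show "z ! t \<noteq> z ! Suc t"
    proof
      assume "Suc t \<in> E"
      then show ?thesis using zS[of "Suc t"] assms by auto
    next
      assume "cz z ! t < cz z ! Suc t"
      then show ?thesis using t assms by (auto simp: nth_cz)
    qed
  qed
qed

lemma Z5: assumes ip: "i < p" shows "z ! i \<in> set (drop p z) \<longleftrightarrow> \<not> priv (cz z) i"
proof
  assume zi: "z ! i \<in> set (drop p z)"
  show "\<not> priv (cz z) i"
  proof
    assume "priv (cz z) i"
    then obtain d where d: "d \<in> E" "i < d" "d \<le> p" "cz z ! (d - 1) = cz z ! i" unfolding priv_def by blast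
    have d1: "1 \<le> d" "d < N" using d n_pos by auto
    have notY: "z ! (d - 1) \<notin> set (drop p z)"
    proof
      assume "z ! (d - 1) \<in> set (drop p z)"
      then obtain j where "p \<le> j" "j < N" "z ! j = z ! (d - 1)" using inY by auto
      then show False using zS[OF d1] d by auto
    qed
    have "z ! i \<le> z ! (d - 1)" using zxs[of i "d - 1"] d by simp
    then have "z ! i < z ! (d - 1)" using zi notY by (cases "z ! i = z ! (d - 1)") auto
    then have "Suc (rkY z (z ! i)) \<le> rkY z (z ! (d - 1))" using rkY_strict zi by simp
    then show False using d ip by (simp add: nth_cz)
  qed
next
  assume np: "\<not> priv (cz z) i"
  show "z ! i \<in> set (drop p z)"
  proof (rule ccontr)
    assume zi: "z ! i \<notin> set (drop p z)"
    define J where "J = {j. i \<le> j \<and> j < p \<and> z ! j = z ! i}"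
    have finJ: "finite J" unfolding J_def by simp
    have neJ: "i \<in> J" unfolding J_def using ip by simp
    define d1 where "d1 = Max J"
    have d1J: "d1 \<in> J" unfolding d1_def using Max_in[OF finJ] neJ by auto
    have mx: "j \<le> d1" if "j \<in> J" for j unfolding d1_def using Max_ge[OF finJ that] .
    have d1p: "i \<le> d1" "d1 < p" "z ! d1 = z ! i" using d1J unfolding J_def by auto
    have k: "1 \<le> Suc d1" "Suc d1 < N" using d1p n_pos by auto
    have "\<forall>j. Suc d1 \<le> j \<longrightarrow> j < N \<longrightarrow> z ! j \<noteq> z ! (Suc d1 - 1)"
    proof (intro allI impI)
      fix j assume j: "Suc d1 \<le> j" "j < N"
      show "z ! j \<noteq> z ! (Suc d1 - 1)"
      proof (cases "j < p")
        case True
        show ?thesis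
        proof
          assume "z ! j = z ! (Suc d1 - 1)"
          then have "j \<in> J" unfolding J_def using True j d1p by simp
          then show False using mx j by fastforce
        qed
      next
        case False
        then show ?thesis using inYj[of j] j zi d1p by auto
      qed
    qed
    then have "Suc d1 \<in> E" using zS[OF k] by simp
    then have "priv (cz z) i" unfolding priv_def using d1p ip
      by (intro bexI[of _ "Suc d1"]) (auto simp: nth_cz)
    then show False using np by simp
  qed
qed

lemma Z6a: assumes "i < p" "p \<le> j" "j < N" shows "z ! i \<le> z ! j \<longleftrightarrow> cz z ! i \<le> blk j"
proof
  assume "z ! i \<le> z ! j"
  then show "cz z ! i \<le> blk j" using rkY_mono[of "z ! i" "z ! j" z] Z1[OF assms(2,3)] assms by (simp add: nth_cz)
next
  assume h: "cz z ! i \<le> blk j"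
  show "z ! i \<le> z ! j"
  proof (rule ccontr)
    assume "\<not> z ! i \<le> z ! j"
    then have "Suc (rkY z (z ! j)) \<le> rkY z (z ! i)" using rkY_strict inYj[OF assms(2,3)] by simp
    then show False using h Z1[OF assms(2,3)] assms by (simp add: nth_cz)
  qed
qed

lemma Z6b: assumes "i < p" "p \<le> j" "j < N"
  shows "z ! j \<le> z ! i \<longleftrightarrow> (blk j < cz z ! i \<or> (blk j = cz z ! i \<and> z ! i \<in> set (drop p z)))"
proof -
  have yj: "z ! j \<in> set (drop p z)" using inYj[OF assms(2,3)] .
  have r: "rkY z (z ! j) = blk j" "cz z ! i = rkY z (z ! i)" using Z1[OF assms(2,3)] nth_cz[OF assms(1)] by auto
  have eq: "z ! j = z ! i \<longleftrightarrow> (blk j = cz z ! i \<and> z ! i \<in> set (drop p z))"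
  proof
    assume "z ! j = z ! i" then show "blk j = cz z ! i \<and> z ! i \<in> set (drop p z)" using r yj by simp
  next
    assume h: "blk j = cz z ! i \<and> z ! i \<in> set (drop p z)"
    show "z ! j = z ! i"
    proof (rule ccontr)
      assume "z ! j \<noteq> z ! i"
      then consider "z ! j < z ! i" | "z ! i < z ! j" by linarith
      then show False
      proof cases
        case 1 then show False using rkY_strict[OF yj] r h by fastforce
      next
        case 2 then show False using rkY_strict[of "z ! i" z "z ! j"] r h by simp
      qed
    qed
  qed
  have "z ! j < z ! i \<longleftrightarrow> blk j < cz z ! i" using Z6a[OF assms] by auto
  then show ?thesis using eq by auto
qed

lemma Z7: assumes "p \<le> t" "Suc t < N" shows "z ! t \<noteq> z ! Suc t \<longleftrightarrow> Suc t \<in> E"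
proof
  assume ne: "z ! t \<noteq> z ! Suc t"
  show "Suc t \<in> E"
  proof (rule ccontr)
    assume "Suc t \<notin> E"
    then obtain j where j: "Suc t \<le> j" "j < N" "z ! j = z ! t" using zS[of "Suc t"] assms by auto
    have "z ! t \<le> z ! Suc t" "z ! Suc t \<le> z ! j" using zys[of t "Suc t"] zys[of "Suc t" j] assms j by auto
    then show False using ne j by simp
  qed
next
  assume "Suc t \<in> E"
  then show "z ! t \<noteq> z ! Suc t" using zS[of "Suc t"] assms by auto
qed

lemma Z_samepat: "samepat z (u (cz z))"
proof -
  let ?c = "cz z"
  have gc: "goodc ?c" by (rule Z3)
  have zso: "sorted_on z 0 p" "sorted_on z p N" using zZ unfolding Zs_def by auto
  have uso: "sorted_on (u ?c) 0 p" "sorted_on (u ?c) p N" using U_xsorted[OF gc] U_ysorted[OF gc] by auto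
  have key: "z ! a \<le> z ! b \<longleftrightarrow> uf ?c a \<le> uf ?c b" if ab: "a < N" "b < N" for a b
  proof (cases "a < p")
    case ap: True
    show ?thesis
    proof (cases "b < p")
      case bp: True
      show ?thesis
      proof (cases "a \<le> b")
        case True then show ?thesis using zxs[OF True bp] xs_uf[OF gc True bp] by simp
      next
        case False
        then have ba: "b \<le> a" by simp
        have z1: "z ! a \<le> z ! b \<longleftrightarrow> z ! b = z ! a" using zxs[OF ba ap] by auto
        have u1: "uf ?c a \<le> uf ?c b \<longleftrightarrow> uf ?c b = uf ?c a" using xs_uf[OF gc ba ap] by auto
        have z2: "z ! b = z ! a \<longleftrightarrow> (\<forall>t. b \<le> t \<longrightarrow> t < a \<longrightarrow> z ! t = z ! Suc t)"
          by (rule sorted_on_eq_iff[OF zso(1)]) (use ba ap in auto)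
        have u2: "u ?c ! b = u ?c ! a \<longleftrightarrow> (\<forall>t. b \<le> t \<longrightarrow> t < a \<longrightarrow> u ?c ! t = u ?c ! Suc t)"
          by (rule sorted_on_eq_iff[OF uso(1)]) (use ba ap in auto)
        have pt: "z ! t = z ! Suc t \<longleftrightarrow> u ?c ! t = u ?c ! Suc t" if "b \<le> t" "t < a" for t
        proof -
          have st: "Suc t < p" using that ap by simp
          then show ?thesis using Z4[OF st] U4[OF gc st] st by (auto simp: nth_u)
        qed
        have "(\<forall>t. b \<le> t \<longrightarrow> t < a \<longrightarrow> z ! t = z ! Suc t) \<longleftrightarrow> (\<forall>t. b \<le> t \<longrightarrow> t < a \<longrightarrow> u ?c ! t = u ?c ! Suc t)"
          using pt by blast
        then show ?thesis using z1 u1 z2 u2 ab by (simp add: nth_u)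
      qed
    next
      case bp: False
      then show ?thesis using Z6a[OF ap _ ab(2)] U6a[OF gc ap] by simp
    qed
  next
    case ap: False
    show ?thesis
    proof (cases "b < p")
      case bp: True
      show ?thesis using Z6b[OF bp _ ab(1)] U6b[OF gc bp] Z5[OF bp] ap by simp
    next
      case bp: False
      show ?thesis
      proof (cases "a \<le> b")
        case True then show ?thesis using zys[of a b] ys_uf[OF gc, of a b] True ap bp ab by simp
      next
        case False
        then have ba: "b \<le> a" by simp
        have z1: "z ! a \<le> z ! b \<longleftrightarrow> z ! b = z ! a" using zys[of b a] ba ab bp by auto
        have u1: "uf ?c a \<le> uf ?c b \<longleftrightarrow> uf ?c b = uf ?c a" using ys_uf[OF gc, of b a] ba ab bp by auto
        have z2: "z ! b = z ! a \<longleftrightarrow> (\<forall>t. b \<le> t \<longrightarrow> t < a \<longrightarrow> z ! t = z ! Suc t)"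
          by (rule sorted_on_eq_iff[OF zso(2)]) (use ba ab bp in auto)
        have u2: "u ?c ! b = u ?c ! a \<longleftrightarrow> (\<forall>t. b \<le> t \<longrightarrow> t < a \<longrightarrow> u ?c ! t = u ?c ! Suc t)"
          by (rule sorted_on_eq_iff[OF uso(2)]) (use ba ab bp in auto)
        have pt: "z ! t = z ! Suc t \<longleftrightarrow> u ?c ! t = u ?c ! Suc t" if "b \<le> t" "t < a" for t
        proof -
          have st: "p \<le> t" "Suc t < N" using that ab bp by auto
          then show ?thesis using Z7[OF st] U7[OF gc st(1)] by (auto simp: nth_u)
        qed
        have "(\<forall>t. b \<le> t \<longrightarrow> t < a \<longrightarrow> z ! t = z ! Suc t) \<longleftrightarrow> (\<forall>t. b \<le> t \<longrightarrow> t < a \<longrightarrow> u ?c ! t = u ?c ! Suc t)"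
          using pt by blast
        then show ?thesis using z1 u1 z2 u2 ab by (simp add: nth_u)
      qed
    qed
  qed
  show ?thesis unfolding samepat_def using key zlen by (simp add: nth_u)
qed

end

lemma cz_pack: assumes "goodc c" shows "cz (pack (u c)) = c"
proof (rule nth_equalityI)
  show "length (cz (pack (u c))) = length c" using assms unfolding cz_def goodc_def by simp
  fix i assume "i < length (cz (pack (u c)))"
  then have ip: "i < p" unfolding cz_def by simp
  have sp: "samepat (u c) (pack (u c))" by (rule samepat_pack)
  have iN: "i < N" using ip by simp
  let ?A = "{j. p \<le> j \<and> j < N \<and> u c ! j < u c ! i}"
  have A2: "?A = {j. p \<le> j \<and> j < N \<and> pack (u c) ! j < pack (u c) ! i}"
    using samepat_less[OF sp] iN by auto
  have e1: "{v\<in>set (drop p (u c)). v < u c ! i} = (!) (u c) ` ?A"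
    by (fastforce simp: in_set_drop_iff image_iff)
  have e2: "{v\<in>set (drop p (pack (u c))). v < pack (u c) ! i} = (!) (pack (u c)) ` ?A"
    unfolding A2 by (fastforce simp: in_set_drop_iff image_iff)
  have "card ((!) (u c) ` ?A) = card ((!) (pack (u c)) ` ?A)"
    by (rule card_image_samepat[OF sp]) auto
  then show "cz (pack (u c)) ! i = c ! i" using U_cz[OF assms ip] e1 e2 ip unfolding cz_def by simp
qed

lemma pack_u_Zs: assumes "goodc c" shows "pack (u c) \<in> Zs"
proof -
  have sp: "samepat (u c) (pack (u c))" by (rule samepat_pack)
  have "Sz (pack (u c)) = E" using samepat_Sz[OF sp] U_Sz[OF assms] by simp
  moreover have "sorted_on (pack (u c)) 0 p" "sorted_on (pack (u c)) p N"
    using samepat_sorted_on[OF sp] U_xsorted[OF assms] U_ysorted[OF assms] by auto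
  ultimately show ?thesis unfolding Zs_def using packed_pack by simp
qed

lemma bij_core: "bij_betw (\<lambda>c. pack (u c)) (Cset p m') Zs"
proof (rule bij_betw_byWitness[where f' = cz])
  show "\<forall>c\<in>Cset p m'. cz (pack (u c)) = c" using cz_pack goodc_Cset by blast
  show "\<forall>z\<in>Zs. pack (u (cz z)) = z"
  proof
    fix z assume zZ: "z \<in> Zs"
    have "pack z = pack (u (cz z))" by (rule samepat_pack_eq[OF Z_samepat[OF zZ]])
    moreover have "pack z = z" using zZ unfolding Zs_def by (simp add: packed_pack_id)
    ultimately show "pack (u (cz z)) = z" by simp
  qed
  show "(\<lambda>c. pack (u c)) ` Cset p m' \<subseteq> Zs" using pack_u_Zs goodc_Cset by blast
  show "cz ` Zs \<subseteq> Cset p m'" using Z3 goodc_Cset by blast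
qed

lemma sinv_pack_u: "goodc c \<Longrightarrow> sinv (pack (u c)) = sum_list c"
  using samepat_sinv[OF samepat_pack, of "u c"] U_sinv by simp

lemma core_sum: "(\<Sum>z\<in>Zs. (q::'a::comm_semiring_1) ^ sinv z) = Gs q p m'"
proof -
  have "(\<Sum>z\<in>Zs. q ^ sinv z) = (\<Sum>c\<in>Cset p m'. q ^ sinv (pack (u c)))"
    using sum.reindex_bij_betw[OF bij_core, of "\<lambda>z. q ^ sinv z"] by simp
  also have "\<dots> = (\<Sum>c\<in>Cset p m'. q ^ sum_list c)"
    by (rule sum.cong) (auto simp: sinv_pack_u goodc_Cset)
  finally show ?thesis unfolding Gs_def .
qed

end



lemma Fract_pow: "(Fract (a::'a::idom) 1) ^ j = Fract (a ^ j) 1"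
  by (induct j) (auto simp: One_fract_def)

lemma qint_Fract: "qint i (Fract (a::'a::idom) 1) = Fract (qint i a) 1"
  by (induct i) (auto simp: qint_Suc Fract_pow, simp add: qint_def Zero_fract_def)

lemma qint_qvar_nz: "0 < i \<Longrightarrow> qint i (qvar :: 'k::field_char_0 poly fract) \<noteq> 0"
proof -
  assume i: "0 < i"
  have "poly (qint i [:0, 1::'k:]) 1 = of_nat i"
    unfolding qint_def by (simp add: poly_sum)
  then have "qint i [:0, 1::'k:] \<noteq> 0" using i by auto
  then show ?thesis unfolding qvar_def qint_Fract by (simp add: Zero_fract_def eq_fract)
qed

lemma qvar_nz: "(qvar :: 'k::field_char_0 poly fract) \<noteq> 0"
  unfolding qvar_def by (simp add: Zero_fract_def eq_fract)


lemma finite_leq: "finite {K. comp_leq K J}"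
  by (rule finite_subset[OF _ finite_comps[of "sum_list J"]]) (auto simp: comp_leq_def)

lemma Lq_eval: "Lq J q I = (if comp_leq I J then q ^ st I J else 0)"
proof -
  have "Lq J q I = (\<Sum>K\<in>{K. comp_leq K J}. if K = I then q ^ st K J else 0)"
    unfolding Lq_def Psi_def by (rule sum.cong) auto
  also have "\<dots> = (if comp_leq I J then q ^ st I J else 0)"
    using finite_leq[of J] by (simp add: sum.delta')
  finally show ?thesis .
qed

lemma supp_Lq: "(q::'a::idom) \<noteq> 0 \<Longrightarrow> supp (Lq J q) = {K. comp_leq K J}"
  unfolding supp_def Lq_eval by auto

lemma length_woc: "is_comp K \<Longrightarrow> length (word_of_comp K) = sum_list K"
  by (simp add: woc_Wd)

lemma woc_inj: assumes "is_comp K" "is_comp K'" "word_of_comp K = word_of_comp K'" shows "K = K'"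
proof -
  have s: "sum_list K = sum_list K'" using length_woc assms by metis
  have "Des K = chg (word_of_comp K)" using woc_Wd[OF assms(1)] chg_Wd[OF Des_sub[OF assms(1)]] by simp
  also have "\<dots> = Des K'" using woc_Wd[OF assms(2)] chg_Wd[OF Des_sub[OF assms(2)]] assms(3) by simp
  finally show ?thesis using comp_inj assms s by blast
qed

lemma sorted_woc: "is_comp K \<Longrightarrow> sorted (word_of_comp K)"
  by (simp add: woc_Wd sorted_Wd)

lemma sinv_sorted: assumes "sorted w" shows "sinv w = 0"
proof -
  have E: "{(i, j). i < j \<and> j < length w \<and> w ! j < w ! i \<and> w ! j \<notin> set (drop (Suc j) w)} = {}"
  proof -
    have "\<not> w ! j < w ! i" if "i < j" "j < length w" for i j
      using assms that unfolding sorted_iff_nth_mono by (simp add: not_less)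
    then show ?thesis by auto
  qed
  show ?thesis unfolding sinv_def E by simp
qed

lemma chg_samepat: assumes sp: "samepat v w" shows "chg v = chg w"
proof (rule set_eqI)
  fix k
  have l: "length v = length w" using sp unfolding samepat_def by simp
  show "k \<in> chg v \<longleftrightarrow> k \<in> chg w"
  proof (cases "1 \<le> k \<and> k < length v")
    case True
    then show ?thesis using samepat_eq[OF sp, of "k - 1" k] l unfolding chg_def by auto
  next
    case False then show ?thesis using l unfolding chg_def by auto
  qed
qed

lemma sorted_samepat: "samepat v w \<Longrightarrow> sorted v \<longleftrightarrow> sorted w"
  using samepat_sorted_on[of v w "length v" 0] sorted_drop_iff[of 0 v] sorted_drop_iff[of 0 w]
  unfolding samepat_def by simp

lemma chg_sub: "chg y \<subseteq> {1..<length y}" unfolding chg_def by auto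

lemma Yset:
  assumes J: "is_comp J" "0 < sum_list J" and ly: "length y = sum_list J"
  shows "{K. comp_leq K J \<and> pack y = word_of_comp K} =
         (if sorted y \<and> Des J \<subseteq> chg y then {comp_from_des (sum_list J) (chg y)} else {})"
proof -
  let ?s = "sum_list J"
  have sp: "samepat y (pack y)" by (rule samepat_pack)
  have cy: "chg (pack y) = chg y" using chg_samepat[OF sp] by simp
  have sy: "sorted (pack y) \<longleftrightarrow> sorted y" using sorted_samepat[OF sp] by simp
  have cfd: "is_comp (comp_from_des ?s (chg y)) \<and> sum_list (comp_from_des ?s (chg y)) = ?s \<and> Des (comp_from_des ?s (chg y)) = chg y"
    by (rule cfd_props) (use J chg_sub[of y] ly in auto)
  show ?thesis
  proof (cases "sorted y \<and> Des J \<subseteq> chg y")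
    case True
    have "{K. comp_leq K J \<and> pack y = word_of_comp K} = {comp_from_des ?s (chg y)}"
    proof (rule set_eqI, rule iffI)
      fix K assume "K \<in> {K. comp_leq K J \<and> pack y = word_of_comp K}"
      then have K: "is_comp K" "sum_list K = ?s" "Des J \<subseteq> Des K" "pack y = word_of_comp K"
        unfolding comp_leq_def by auto
      have "chg y = Des K" using K cy woc_Wd[OF K(1)] chg_Wd[OF Des_sub[OF K(1)]] by simp
      then have "K = comp_from_des ?s (chg y)" using comp_inj[of K] K cfd by auto
      then show "K \<in> {comp_from_des ?s (chg y)}" by simp
    next
      fix K assume "K \<in> {comp_from_des ?s (chg y)}"
      then have K: "K = comp_from_des ?s (chg y)" by simp
      have "pack y = Wd (length (pack y)) (chg (pack y))"
        by (rule packed_sorted_Wd) (use packed_pack True sy in auto)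
      also have "\<dots> = word_of_comp K" using K cfd cy ly woc_Wd[of K] by simp
      finally show "K \<in> {K. comp_leq K J \<and> pack y = word_of_comp K}"
        using K cfd True J unfolding comp_leq_def by auto
    qed
    then show ?thesis using True by simp
  next
    case False
    have "\<not> (comp_leq K J \<and> pack y = word_of_comp K)" for K
    proof
      assume "comp_leq K J \<and> pack y = word_of_comp K"
      then have K: "is_comp K" "sum_list K = ?s" "Des J \<subseteq> Des K" "pack y = word_of_comp K"
        unfolding comp_leq_def by auto
      have "chg y = Des K" using K cy woc_Wd[OF K(1)] chg_Wd[OF Des_sub[OF K(1)]] by simp
      moreover have "sorted y" using sy K sorted_woc by simp
      ultimately show False using False K by simp
    qed
    then show ?thesis using False by auto
  qed
qed


lemma sum_Yset:
  assumes J: "is_comp J" "0 < sum_list J" and ly: "length y = sum_list J"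
  shows "(\<Sum>K\<in>{K. comp_leq K J}. if pack y = word_of_comp K then g K else 0) =
         (if sorted y \<and> Des J \<subseteq> chg y then g (comp_from_des (sum_list J) (chg y)) else 0)"
proof -
  have "(\<Sum>K\<in>{K. comp_leq K J}. if pack y = word_of_comp K then g K else 0) =
        sum g {K\<in>{K. comp_leq K J}. pack y = word_of_comp K}"
    by (rule sum.inter_filter[OF finite_leq, symmetric])
  also have "{K\<in>{K. comp_leq K J}. pack y = word_of_comp K} = {K. comp_leq K J \<and> pack y = word_of_comp K}" by simp
  also have "\<dots> = (if sorted y \<and> Des J \<subseteq> chg y then {comp_from_des (sum_list J) (chg y)} else {})"
    by (rule Yset[OF J ly])
  finally show ?thesis by simp
qed

lemma sigma_Lq: assumes "(q::'a::idom) \<noteq> 0"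
  shows "sigma (Lq J q) z = (\<Sum>K\<in>{K. comp_leq K J \<and> word_of_comp K = z}. q ^ st K J)"
  unfolding sigma_def supp_Lq[OF assms] by (rule sum.cong) (auto simp: Lq_eval)

lemma sigma_Lq_woc: assumes "(q::'a::idom) \<noteq> 0" "comp_leq K0 J"
  shows "sigma (Lq J q) (word_of_comp K0) = q ^ st K0 J"
proof -
  have "{K. comp_leq K J \<and> word_of_comp K = word_of_comp K0} = {K0}"
    using assms(2) woc_inj unfolding comp_leq_def by blast
  then show ?thesis unfolding sigma_Lq[OF assms(1)] by simp
qed

lemma supp_sigma_Lq: assumes "(q::'a::idom) \<noteq> 0"
  shows "supp (sigma (Lq J q)) = word_of_comp ` {K. comp_leq K J}"
proof (rule set_eqI, rule iffI)
  fix z assume "z \<in> supp (sigma (Lq J q))"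
  then have "sigma (Lq J q) z \<noteq> 0" unfolding supp_def by simp
  then have "{K. comp_leq K J \<and> word_of_comp K = z} \<noteq> {}" unfolding sigma_Lq[OF assms] by (metis sum.empty)
  then show "z \<in> word_of_comp ` {K. comp_leq K J}" by auto
next
  fix z assume "z \<in> word_of_comp ` {K. comp_leq K J}"
  then obtain K where "comp_leq K J" "z = word_of_comp K" by auto
  then show "z \<in> supp (sigma (Lq J q))" unfolding supp_def using sigma_Lq_woc[OF assms] assms by simp
qed

lemma st_single: "st K [p] = 0"
  unfolding st_def by (simp add: Des_def)

lemma Mstar_woc:
  assumes K: "is_comp K" and K': "is_comp K'"
  shows "Mstar_coeff (q::'a::field) (word_of_comp K) (word_of_comp K') z =
    (if packed z \<and> length z = sum_list K + sum_list K' \<and> pack (take (sum_list K) z) = word_of_comp K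
        \<and> pack (drop (sum_list K) z) = word_of_comp K' then q ^ sinv z else 0)"
  unfolding Mstar_coeff_def using sinv_sorted[OF sorted_woc[OF K]] sinv_sorted[OF sorted_woc[OF K']]
    length_woc[OF K] length_woc[OF K'] by (simp add: power_int_of_nat)


lemma inj_woc: "inj_on word_of_comp {K. comp_leq K J}"
  by (rule inj_onI) (use woc_inj in \<open>auto simp: comp_leq_def\<close>)

definition WV :: "'a::comm_semiring_1 \<Rightarrow> nat \<Rightarrow> nat list \<Rightarrow> nat list \<Rightarrow> 'a" where
  "WV q p I z = (if packed z \<and> length z = p + sum_list I \<and> sorted (take p z) \<and> sorted (drop p z)
      \<and> Des I \<subseteq> chg (drop p z)
     then q ^ st (comp_from_des (sum_list I) (chg (drop p z))) I * q ^ sinv z else 0)"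

lemma wq_eval:
  fixes q :: "'a::field"
  assumes q: "q \<noteq> 0" and p: "0 < p" and I: "is_comp I" "I \<noteq> []"
  shows "wq_star q (sigma (Lq [p] q)) (sigma (Lq I q)) z = WV q p I z"
proof -
  let ?n = "sum_list I"
  have n: "0 < ?n" using I by (cases I) auto
  let ?CA = "{K. comp_leq K [p]}" and ?CB = "{K. comp_leq K I}"
  let ?F = "sigma (Lq [p] q)" and ?G = "sigma (Lq I q)"
  let ?Pz = "packed z \<and> length z = p + ?n"
  have "wq_star q ?F ?G z = (\<Sum>K\<in>?CA. \<Sum>K'\<in>?CB. ?F (word_of_comp K) * ?G (word_of_comp K') *
                  Mstar_coeff q (word_of_comp K) (word_of_comp K') z)"
    unfolding wq_star_def supp_sigma_Lq[OF q] by (simp add: sum.reindex inj_woc)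
  also have "\<dots> = (\<Sum>K\<in>?CA. if pack (take p z) = word_of_comp K then
        (\<Sum>K'\<in>?CB. if pack (drop p z) = word_of_comp K' then
            (if ?Pz then q ^ st K' I * q ^ sinv z else 0) else 0) else 0)"
  proof (rule sum.cong[OF refl])
    fix K assume K: "K \<in> ?CA"
    then have Kc: "is_comp K" "sum_list K = p" unfolding comp_leq_def by auto
    have FK: "?F (word_of_comp K) = 1" using sigma_Lq_woc[OF q, of K "[p]"] K st_single by simp
    have "(\<Sum>K'\<in>?CB. ?F (word_of_comp K) * ?G (word_of_comp K') * Mstar_coeff q (word_of_comp K) (word_of_comp K') z)
        = (\<Sum>K'\<in>?CB. if pack (take p z) = word_of_comp K then (if pack (drop p z) = word_of_comp K' then
            (if ?Pz then q ^ st K' I * q ^ sinv z else 0) else 0) else 0)"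
    proof (rule sum.cong[OF refl])
      fix K' assume K': "K' \<in> ?CB"
      then have Kc': "is_comp K'" "sum_list K' = ?n" unfolding comp_leq_def by auto
      have GK: "?G (word_of_comp K') = q ^ st K' I" using sigma_Lq_woc[OF q] K' by simp
      show "?F (word_of_comp K) * ?G (word_of_comp K') * Mstar_coeff q (word_of_comp K) (word_of_comp K') z =
          (if pack (take p z) = word_of_comp K then (if pack (drop p z) = word_of_comp K' then
            (if ?Pz then q ^ st K' I * q ^ sinv z else 0) else 0) else 0)"
        unfolding FK GK Mstar_woc[OF Kc(1) Kc'(1)] Kc Kc' by auto
    qed
    also have "\<dots> = (if pack (take p z) = word_of_comp K then
        (\<Sum>K'\<in>?CB. if pack (drop p z) = word_of_comp K' then
            (if ?Pz then q ^ st K' I * q ^ sinv z else 0) else 0) else 0)" by simp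
    finally show "(\<Sum>K'\<in>?CB. ?F (word_of_comp K) * ?G (word_of_comp K') * Mstar_coeff q (word_of_comp K) (word_of_comp K') z) = \<dots>" .
  qed
  also have "\<dots> = WV q p I z"
  proof (cases ?Pz)
    case False
    have W0: "WV q p I z = 0" unfolding WV_def using False by auto
    show ?thesis unfolding W0 if_not_P[OF False] by (intro sum.neutral ballI) auto
  next
    case True
    have ly: "length (drop p z) = sum_list I" "length (take p z) = sum_list [p]" using True by auto
    have inner: "(\<Sum>K'\<in>?CB. if pack (drop p z) = word_of_comp K' then
            (if ?Pz then q ^ st K' I * q ^ sinv z else 0) else 0) =
        (if sorted (drop p z) \<and> Des I \<subseteq> chg (drop p z) then
           q ^ st (comp_from_des ?n (chg (drop p z))) I * q ^ sinv z else 0)"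
      unfolding if_P[OF True] using sum_Yset[OF I(1) n ly(1), of "\<lambda>K'. q ^ st K' I * q ^ sinv z"] by simp
    have outer: "(\<Sum>K\<in>?CA. if pack (take p z) = word_of_comp K then V else 0) =
        (if sorted (take p z) then V else 0)" for V
      using sum_Yset[of "[p]" "take p z" "\<lambda>_. V"] p ly(2) by (simp add: Des_def)
    show ?thesis unfolding inner outer WV_def using True by auto
  qed
  finally show ?thesis .
qed


lemma Des_tri: assumes "I \<noteq> []" shows "Des (tri p I) = (+) p ` Des I"
proof -
  obtain a K where I: "I = a # K" using assms by (cases I) auto
  show ?thesis unfolding tri_def I by (simp add: Des_Cons image_image add.assoc)
qed

lemma tri_comp: assumes "0 < p" "is_comp I" "I \<noteq> []"
  shows "is_comp (tri p I) \<and> sum_list (tri p I) = p + sum_list I"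
  using assms by (cases I) (auto simp: tri_def)

lemma chg_shift:
  assumes lz: "length z = p + n" and so: "sorted (drop p z)"
  shows "(+) p ` chg (drop p z) = {d\<in>Sz z. p < d}"
proof -
  have so2: "sorted_on z p (length z)" using so sorted_drop_iff by simp
  have key: "k \<in> chg (drop p z) \<longleftrightarrow> p + k \<in> Sz z" if k: "1 \<le> k" "k < n" for k
  proof -
    have a: "k \<in> chg (drop p z) \<longleftrightarrow> z ! (p + k - 1) \<noteq> z ! (p + k)"
      unfolding chg_def using k lz by (simp add: add.commute)
    have b: "p + k \<in> Sz z \<longleftrightarrow> \<not> (\<exists>j. p + k \<le> j \<and> j < p + n \<and> z ! j = z ! (p + k - 1))"
      unfolding Sz_def in_set_drop_iff lz using k by auto
    have "(\<exists>j. p + k \<le> j \<and> j < p + n \<and> z ! j = z ! (p + k - 1)) \<longleftrightarrow> z ! (p + k) = z ! (p + k - 1)"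
    proof
      assume "\<exists>j. p + k \<le> j \<and> j < p + n \<and> z ! j = z ! (p + k - 1)"
      then obtain j where j: "p + k \<le> j" "j < p + n" "z ! j = z ! (p + k - 1)" by blast
      have "z ! (p + k - 1) \<le> z ! (p + k)"
        using so2[unfolded sorted_on_def, rule_format, of "p + k - 1" "p + k"] j k lz by auto
      moreover have "z ! (p + k) \<le> z ! j"
        using so2[unfolded sorted_on_def, rule_format, of "p + k" j] j k lz by auto
      ultimately show "z ! (p + k) = z ! (p + k - 1)" using j by simp
    next
      assume "z ! (p + k) = z ! (p + k - 1)"
      then show "\<exists>j. p + k \<le> j \<and> j < p + n \<and> z ! j = z ! (p + k - 1)" using k by (intro exI[of _ "p + k"]) auto
    qed
    then show ?thesis using a b by auto
  qed
  show ?thesis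
  proof (rule set_eqI, rule iffI)
    fix d assume "d \<in> (+) p ` chg (drop p z)"
    then obtain k where "d = p + k" "k \<in> chg (drop p z)" by auto
    moreover then have "1 \<le> k" "k < n" using chg_sub[of "drop p z"] lz by auto
    ultimately show "d \<in> {d\<in>Sz z. p < d}" using key by auto
  next
    fix d assume d: "d \<in> {d\<in>Sz z. p < d}"
    then have "d < p + n" unfolding Sz_def using lz by auto
    define k where "k = d - p"
    have k: "d = p + k" "1 \<le> k" "k < n" using d \<open>d < p + n\<close> unfolding k_def by auto
    then show "d \<in> (+) p ` chg (drop p z)" using key[OF k(2,3)] d by auto
  qed
qed

definition stS :: "nat set \<Rightarrow> nat set \<Rightarrow> nat" where
  "stS A B = card {(a, b). a \<in> A \<and> b \<in> B \<and> b \<le> a}"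

lemma st_stS: "st K J = stS (Des K) (Des J)" unfolding st_def stS_def by simp

lemma stS_shift: assumes that: "(+) p ` A = {a\<in>A'. p < a}"
  shows "stS A B = stS {a\<in>A'. p < a} ((+) p ` B)"
proof -
  let ?S = "{(a, b). a \<in> A \<and> b \<in> B \<and> b \<le> a}"
  let ?T = "{(a, b). a \<in> {a\<in>A'. p < a} \<and> b \<in> (+) p ` B \<and> b \<le> a}"
  let ?f = "\<lambda>(a, b). (p + a, p + b)"
  have inj: "inj_on ?f ?S" by (auto simp: inj_on_def)
  have "?f ` ?S = ?T"
  proof (rule set_eqI, rule iffI)
    fix x assume "x \<in> ?f ` ?S"
    then obtain a b where "x = (p + a, p + b)" "a \<in> A" "b \<in> B" "b \<le> a" by auto
    then show "x \<in> ?T" using that by auto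
  next
    fix x assume "x \<in> ?T"
    then obtain a b where x: "x = (a, b)" "a \<in> A'" "p < a" "b \<in> (+) p ` B" "b \<le> a" by auto
    then obtain e where e: "b = p + e" "e \<in> B" by auto
    have "a \<in> (+) p ` A" using that x by auto
    then obtain k where k: "a = p + k" "k \<in> A" by auto
    have "(k, e) \<in> ?S" using x e k by auto
    moreover have "x = ?f (k, e)" using x e k by simp
    ultimately show "x \<in> ?f ` ?S" by (rule rev_image_eqI)
  qed
  then show ?thesis unfolding stS_def using card_image[OF inj] by simp
qed

lemma finite_packed_len: "finite {z. packed z \<and> length z = N}"
proof -
  have "{z. packed z \<and> length z = N} \<subseteq> {z. set z \<subseteq> {0..N} \<and> length z = N}"
  proof
    fix z assume z: "z \<in> {z. packed z \<and> length z = N}"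
    then obtain M where M: "set z = {1..M}" unfolding packed_def by auto
    have "card (set z) \<le> length z" by (rule card_length)
    then have "M \<le> N" using M z by simp
    then show "z \<in> {z. set z \<subseteq> {0..N} \<and> length z = N}" using M z by auto
  qed
  moreover have "finite {z. set z \<subseteq> {0..N} \<and> length z = N}" by (rule finite_lists_length_eq) simp
  ultimately show ?thesis by (rule finite_subset)
qed


lemma stS_restrict: assumes "\<forall>b\<in>B. p < b" shows "stS {a\<in>A. p < a} B = stS A B"
proof -
  have "{(a, b). a \<in> {a\<in>A. p < a} \<and> b \<in> B \<and> b \<le> a} = {(a, b). a \<in> A \<and> b \<in> B \<and> b \<le> a}"
    using assms by fastforce
  then show ?thesis unfolding stS_def by simp
qed

theorem mainTheorem19:
  fixes p :: nat and I :: "nat list"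
  assumes "0 < p" and "is_comp I" and "I \<noteq> []"
  shows "sym_star (qvar :: 'k::field_char_0 poly fract) (Lq [p] qvar) (Lq I qvar) =
         (\<lambda>J. \<Sum>K\<in>{K. comp_leq K (tri p I)}.
                qvar ^ st K (tri p I) * qbinom (mK p K + p) p qvar * Psi K J)"
proof (rule ext)
  fix J
  let ?q = "qvar :: 'k::field_char_0 poly fract"
  let ?n = "sum_list I"
  let ?T = "tri p I"
  let ?N = "p + ?n"
  let ?W = "WV ?q p I"
  have p: "0 < p" and I: "is_comp I" "I \<noteq> []" using assms by auto
  have n: "0 < ?n" using I by (cases I) auto
  have q: "?q \<noteq> 0" by (rule qvar_nz)
  have T: "is_comp ?T" "sum_list ?T = ?N" "Des ?T = (+) p ` Des I"
    using tri_comp[OF p I] Des_tri[OF I(2)] by auto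
  have DesI: "Des I \<subseteq> {1..<?n}" by (rule Des_sub[OF I(1)])
  have Wext: "wq_star ?q (sigma (Lq [p] ?q)) (sigma (Lq I ?q)) = ?W"
    by (rule ext) (rule wq_eval[OF q p I])
  let ?ZA = "{z. packed z \<and> length z = ?N \<and> sorted (take p z) \<and> sorted (drop p z) \<and> Des I \<subseteq> chg (drop p z)}"
  have finZA: "finite {z\<in>?ZA. WC z = J}"
    by (rule finite_subset[OF _ finite_packed_len[of ?N]]) auto
  have "sym_star ?q (Lq [p] ?q) (Lq I ?q) J = (\<Sum>z\<in>{z. z \<in> supp ?W \<and> packed z \<and> WC z = J}. ?W z)"
    unfolding sym_star_def zeta_def Wext ..
  also have "\<dots> = (\<Sum>z\<in>{z\<in>?ZA. WC z = J}. ?W z)"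
  proof (rule sum.mono_neutral_left[OF finZA])
    show "{z. z \<in> supp ?W \<and> packed z \<and> WC z = J} \<subseteq> {z\<in>?ZA. WC z = J}"
    proof
      fix z assume "z \<in> {z. z \<in> supp ?W \<and> packed z \<and> WC z = J}"
      then have "?W z \<noteq> 0" "WC z = J" unfolding supp_def by auto
      then show "z \<in> {z\<in>?ZA. WC z = J}" unfolding WV_def by (auto split: if_splits)
    qed
    show "\<forall>z\<in>{z\<in>?ZA. WC z = J} - {z. z \<in> supp ?W \<and> packed z \<and> WC z = J}. ?W z = 0"
      unfolding supp_def by auto
  qed
  finally have LHS: "sym_star ?q (Lq [p] ?q) (Lq I ?q) J = (\<Sum>z\<in>{z\<in>?ZA. WC z = J}. ?W z)" .
  have RHS: "(\<Sum>K\<in>{K. comp_leq K ?T}. ?q ^ st K ?T * qbinom (mK p K + p) p ?q * Psi K J)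
      = (if comp_leq J ?T then ?q ^ st J ?T * qbinom (mK p J + p) p ?q else 0)"
  proof -
    have "(\<Sum>K\<in>{K. comp_leq K ?T}. ?q ^ st K ?T * qbinom (mK p K + p) p ?q * Psi K J)
        = (\<Sum>K\<in>{K. comp_leq K ?T}. if K = J then ?q ^ st K ?T * qbinom (mK p K + p) p ?q else 0)"
      unfolding Psi_def by (rule sum.cong) auto
    also have "\<dots> = (if comp_leq J ?T then ?q ^ st J ?T * qbinom (mK p J + p) p ?q else 0)"
      using finite_leq[of ?T] by (simp add: sum.delta')
    finally show ?thesis .
  qed
  have mem: "is_comp J \<and> sum_list J = ?N \<and> Des J = Sz z \<and> (+) p ` chg (drop p z) = {d\<in>Des J. p < d}"
    if z: "packed z" "length z = ?N" "sorted (drop p z)" "WC z = J" for z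
  proof -
    have "is_comp J \<and> sum_list J = ?N \<and> Des J = Sz z" using WC_iff[of z J] z p by simp
    moreover have "(+) p ` chg (drop p z) = {d\<in>Sz z. p < d}" by (rule chg_shift) (use z in auto)
    ultimately show ?thesis by simp
  qed
  have DesT_iff: "Des I \<subseteq> chg (drop p z) \<longleftrightarrow> Des ?T \<subseteq> Des J"
    if sh: "(+) p ` chg (drop p z) = {d\<in>Des J. p < d}" for z
  proof
    assume "Des I \<subseteq> chg (drop p z)"
    then have "(+) p ` Des I \<subseteq> (+) p ` chg (drop p z)" by auto
    then show "Des ?T \<subseteq> Des J" using sh T by auto
  next
    assume h: "Des ?T \<subseteq> Des J"
    show "Des I \<subseteq> chg (drop p z)"
    proof
      fix e assume e: "e \<in> Des I"
      then have "p + e \<in> {d\<in>Des J. p < d}" using h T DesI by auto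
      then have "p + e \<in> (+) p ` chg (drop p z)" using sh by simp
      then show "e \<in> chg (drop p z)" by auto
    qed
  qed
  show "sym_star ?q (Lq [p] ?q) (Lq I ?q) J =
        (\<Sum>K\<in>{K. comp_leq K ?T}. ?q ^ st K ?T * qbinom (mK p K + p) p ?q * Psi K J)"
  proof (cases "comp_leq J ?T")
    case False
    have E0: "{z\<in>?ZA. WC z = J} = {}"
    proof (rule ccontr)
      assume "{z\<in>?ZA. WC z = J} \<noteq> {}"
      then obtain z where z: "z \<in> ?ZA" "WC z = J" by auto
      have m: "is_comp J \<and> sum_list J = ?N \<and> Des J = Sz z \<and> (+) p ` chg (drop p z) = {d\<in>Des J. p < d}"
        using mem[of z] z by auto
      then have "Des ?T \<subseteq> Des J" using DesT_iff[of z] z by auto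
      then have "comp_leq J ?T" unfolding comp_leq_def using m T by auto
      then show False using False by simp
    qed
    show ?thesis unfolding LHS RHS E0 using False by simp
  next
    case True
    have J: "is_comp J" "sum_list J = ?N" "Des ?T \<subseteq> Des J" using True T unfolding comp_leq_def by auto
    interpret C: core p ?n "Des J"
      by standard (use p n Des_sub[OF J(1)] J(2) in auto)
    have ZA_eq: "{z\<in>?ZA. WC z = J} = C.Zs"
    proof (rule set_eqI, rule iffI)
      fix z assume z: "z \<in> {z\<in>?ZA. WC z = J}"
      then have m: "Des J = Sz z" using mem[of z] by auto
      then show "z \<in> C.Zs" unfolding C.Zs_def using z by (auto simp: sorted_take_iff sorted_drop_iff)
    next
      fix z assume z: "z \<in> C.Zs"
      then have z1: "packed z" "length z = ?N" "Sz z = Des J" "sorted (take p z)" "sorted (drop p z)"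
        unfolding C.Zs_def by (auto simp: sorted_take_iff sorted_drop_iff)
      have WC: "WC z = J" using WC_iff[of z J] z1 J p by auto
      have "(+) p ` chg (drop p z) = {d\<in>Des J. p < d}" using mem[of z] z1 WC by auto
      then have "Des I \<subseteq> chg (drop p z)" using DesT_iff J by auto
      then show "z \<in> {z\<in>?ZA. WC z = J}" using z1 WC by auto
    qed
    have Wz: "?W z = ?q ^ st J ?T * ?q ^ sinv z" if z: "z \<in> C.Zs" for z
    proof -
      have zA: "z \<in> {z\<in>?ZA. WC z = J}" using z ZA_eq by simp
      then have z1: "packed z" "length z = ?N" "sorted (take p z)" "sorted (drop p z)" "Des I \<subseteq> chg (drop p z)" "WC z = J"
        by auto
      have sh: "(+) p ` chg (drop p z) = {d\<in>Des J. p < d}" using mem[of z] z1 by auto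
      have cs: "chg (drop p z) \<subseteq> {1..<?n}" using chg_sub[of "drop p z"] z1 by simp
      have dc: "Des (comp_from_des ?n (chg (drop p z))) = chg (drop p z)" using cfd_props[OF n cs] by simp
      have "st (comp_from_des ?n (chg (drop p z))) I = stS (chg (drop p z)) (Des I)"
        unfolding st_stS dc ..
      also have "\<dots> = stS {a\<in>Des J. p < a} ((+) p ` Des I)" by (rule stS_shift[OF sh])
      also have "\<dots> = stS (Des J) (Des ?T)"
      proof -
        have "\<forall>x\<in>Des I. 0 < x" using DesI by auto
        then have "stS {a\<in>Des J. p < a} ((+) p ` Des I) = stS (Des J) ((+) p ` Des I)"
          using stS_restrict[of "(+) p ` Des I" p "Des J"] by auto
        then show ?thesis using T by simp
      qed
      also have "\<dots> = st J ?T" unfolding st_stS ..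
      finally show ?thesis unfolding WV_def using z1 by simp
    qed
    have "(\<Sum>z\<in>{z\<in>?ZA. WC z = J}. ?W z) = (\<Sum>z\<in>C.Zs. ?q ^ st J ?T * ?q ^ sinv z)"
      unfolding ZA_eq by (rule sum.cong) (auto simp: Wz)
    also have "\<dots> = ?q ^ st J ?T * (\<Sum>z\<in>C.Zs. ?q ^ sinv z)" by (simp add: sum_distrib_left)
    also have "\<dots> = ?q ^ st J ?T * Gs ?q p C.m'" using C.core_sum[of ?q] by simp
    also have "\<dots> = ?q ^ st J ?T * qbinom (mK p J + p) p ?q"
      using Gs_qbinom[of ?q p C.m', OF qint_qvar_nz] unfolding C.m'_def mK_def by simp
    finally show ?thesis unfolding LHS RHS using True by simp
  qed
qed


end
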